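(* Let $\Lambda$ be a finite-dimensional algebra over an algebraically closed field $K$ and let $\Lambda\twoheadrightarrow\Lambda'$ be a surjective algebra homomorphism. Suppose there exist a dimension vector $\mathbf{d}'$ and $\theta'\in K_0(\mathrm{proj}\,\Lambda')$ such that there are infinitely many isomorphism classes of $\theta'$-stable $\Lambda'$-modules of dimension vector $\mathbf{d}'$. Then there exist a dimension vector $\mathbf{d}$ and $\theta\in K_0(\mathrm{proj}\,\Lambda)$ such that there are infinitely many isomorphism classes of $\theta$-stable $\Lambda$-modules of dimension vector $\mathbf{d}$.
   Context: Modules are finite-dimensional right modules; $\Lambda'$-modules are regarded as $\Lambda$-modules by restriction along the surjection. $K_0(\mathrm{proj}\,\Lambda)\cong K_0(\mathrm{mod}\,\Lambda)\cong\mathbb{Z}^n$ via indecomposable projectives and simples; the dimension vector of $M$ is $[M]\in K_0(\mathrm{mod}\,\Lambda)$; $\langle-,-\rangle$ is the canonical pairing ($\langle[P],[M]\rangle=\dim\mathrm{Hom}_\Lambda(P,M)$). For $\theta\in K_0(\mathrm{proj}\,\Lambda)$, $M$ is $\theta$-stable if $\langle\theta,[M]\rangle=0$ and $\langle\theta,[M']\rangle<0$ for every nonzero proper submodule $M'\subset M$. *)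

theory Defs
  imports Complex_Main "HOL-Computational_Algebra.Polynomial"
begin

definition fd_algebra :: "('k::field \<Rightarrow> 'a::ring_1 \<Rightarrow> 'a) \<Rightarrow> bool" where
  "fd_algebra sc \<longleftrightarrow> vector_space sc
     \<and> (\<forall>c x y. sc c (x * y) = sc c x * y \<and> sc c (x * y) = x * sc c y)
     \<and> (\<exists>B. finite B \<and> module.span sc B = UNIV)"

definition alg_hom ::
  "('k::field \<Rightarrow> 'a::ring_1 \<Rightarrow> 'a) \<Rightarrow> ('k \<Rightarrow> 'b::ring_1 \<Rightarrow> 'b) \<Rightarrow> ('a \<Rightarrow> 'b) \<Rightarrow> bool" where
  "alg_hom sc sc' f \<longleftrightarrow> f 1 = 1 \<and> (\<forall>x y. f (x * y) = f x * f y)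
     \<and> (\<forall>x y. f (x + y) = f x + f y) \<and> (\<forall>c x. f (sc c x) = sc' c (f x))"

text \<open>Matrices are functions nat => nat => 'k; a matrix is n x m if it vanishes
  outside rows < n and columns < m. Row vectors are functions nat => 'k.\<close>

type_synonym 'k mtx = "nat \<Rightarrow> nat \<Rightarrow> 'k"
type_synonym 'k rvec = "nat \<Rightarrow> 'k"

definition mat_on :: "nat \<Rightarrow> nat \<Rightarrow> 'k::zero mtx \<Rightarrow> bool" where
  "mat_on r c A \<longleftrightarrow> (\<forall>i j. (r \<le> i \<or> c \<le> j) \<longrightarrow> A i j = 0)"

definition vec_on :: "nat \<Rightarrow> 'k::zero rvec \<Rightarrow> bool" where
  "vec_on n v \<longleftrightarrow> (\<forall>i. n \<le> i \<longrightarrow> v i = 0)"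

definition mmul :: "nat \<Rightarrow> 'k::comm_ring_1 mtx \<Rightarrow> 'k mtx \<Rightarrow> 'k mtx" where
  "mmul n A B = (\<lambda>i j. \<Sum>l<n. A i l * B l j)"

definition idm :: "nat \<Rightarrow> 'k::comm_ring_1 mtx" where
  "idm n = (\<lambda>i j. if i = j \<and> i < n then 1 else 0)"

definition vmul :: "nat \<Rightarrow> 'k::comm_ring_1 rvec \<Rightarrow> 'k mtx \<Rightarrow> 'k rvec" where
  "vmul n v A = (\<lambda>j. \<Sum>i<n. v i * A i j)"

definition lin_ind :: "'k::field mtx list \<Rightarrow> bool" where
  "lin_ind xs \<longleftrightarrow> (\<forall>c. (\<lambda>i j. \<Sum>l<length xs. c l * (xs ! l) i j) = (\<lambda>i j. 0)
                        \<longrightarrow> (\<forall>l<length xs. c l = 0))"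

definition mdim :: "'k::field mtx set \<Rightarrow> nat" where
  "mdim S = (GREATEST k. \<exists>xs. length xs = k \<and> set xs \<subseteq> S \<and> lin_ind xs)"

text \<open>A finite-dimensional right module over (the algebra on) 'a is K^n (row vectors)
  with v . a = v * rho a, where rho : 'a => n x n matrices is a unital K-algebra
  homomorphism (right action: rho (a * b) = rho a * rho b).\<close>

type_synonym ('a, 'k) rmod = "nat \<times> ('a \<Rightarrow> 'k mtx)"

definition is_rmod :: "('k::field \<Rightarrow> 'a::ring_1 \<Rightarrow> 'a) \<Rightarrow> ('a, 'k) rmod \<Rightarrow> bool" where
  "is_rmod sc M \<longleftrightarrow> (case M of (n, \<rho>) \<Rightarrow>
      (\<forall>a. mat_on n n (\<rho> a)) \<and> \<rho> 1 = idm n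
    \<and> (\<forall>a b. \<rho> (a * b) = mmul n (\<rho> a) (\<rho> b))
    \<and> (\<forall>a b. \<rho> (a + b) = (\<lambda>i j. \<rho> a i j + \<rho> b i j))
    \<and> (\<forall>c a. \<rho> (sc c a) = (\<lambda>i j. c * \<rho> a i j)))"

text \<open>Module homomorphisms M -> N: matrices X (v |-> v * X) commuting with the action.\<close>

definition hom :: "('a, 'k::field) rmod \<Rightarrow> ('a, 'k) rmod \<Rightarrow> 'k mtx set" where
  "hom M N = (case M of (m, \<rho>) \<Rightarrow> case N of (n, \<sigma>) \<Rightarrow>
     {X. mat_on m n X \<and> (\<forall>a. mmul m (\<rho> a) X = mmul n X (\<sigma> a))})"

definition iso_mod :: "('a, 'k::field) rmod \<Rightarrow> ('a, 'k) rmod \<Rightarrow> bool" where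
  "iso_mod M N \<longleftrightarrow> (\<exists>X\<in>hom M N. \<exists>Y\<in>hom N M.
      mmul (fst N) X Y = idm (fst M) \<and> mmul (fst M) Y X = idm (fst N))"

definition submod :: "('a, 'k::field) rmod \<Rightarrow> 'k rvec set \<Rightarrow> bool" where
  "submod M U \<longleftrightarrow> (case M of (n, \<rho>) \<Rightarrow>
      (\<forall>v\<in>U. vec_on n v) \<and> (\<lambda>i. 0) \<in> U
    \<and> (\<forall>v\<in>U. \<forall>w\<in>U. (\<lambda>i. v i + w i) \<in> U)
    \<and> (\<forall>c. \<forall>v\<in>U. (\<lambda>i. c * v i) \<in> U)
    \<and> (\<forall>a. \<forall>v\<in>U. vmul n v (\<rho> a) \<in> U))"

definition hom_into :: "('a, 'k::field) rmod \<Rightarrow> ('a, 'k) rmod \<Rightarrow> 'k rvec set \<Rightarrow> 'k mtx set" where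
  "hom_into P M U = {X \<in> hom P M. \<forall>v. vec_on (fst P) v \<longrightarrow> vmul (fst P) v X \<in> U}"

definition surj_hom :: "('a, 'k::field) rmod \<Rightarrow> ('a, 'k) rmod \<Rightarrow> 'k mtx \<Rightarrow> bool" where
  "surj_hom M N g \<longleftrightarrow> g \<in> hom M N \<and>
     (\<forall>w. vec_on (fst N) w \<longrightarrow> (\<exists>v. vec_on (fst M) v \<and> vmul (fst M) v g = w))"

definition is_proj :: "('k::field \<Rightarrow> 'a::ring_1 \<Rightarrow> 'a) \<Rightarrow> ('a, 'k) rmod \<Rightarrow> bool" where
  "is_proj sc P \<longleftrightarrow> is_rmod sc P \<and>
     (\<forall>M N g f. is_rmod sc M \<longrightarrow> is_rmod sc N \<longrightarrow> surj_hom M N g \<longrightarrow> f \<in> hom P N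
        \<longrightarrow> (\<exists>h\<in>hom P M. mmul (fst M) h g = f))"

text \<open>An element theta of K_0(proj A) is represented as [P] - [Q] for projectives P, Q
  (every element has this form). The canonical pairing
  <theta, [M]> = dim Hom(P,M) - dim Hom(Q,M).\<close>

definition is_K0proj :: "('k::field \<Rightarrow> 'a::ring_1 \<Rightarrow> 'a) \<Rightarrow> ('a, 'k) rmod \<times> ('a, 'k) rmod \<Rightarrow> bool" where
  "is_K0proj sc \<theta> \<longleftrightarrow> is_proj sc (fst \<theta>) \<and> is_proj sc (snd \<theta>)"

definition pairing :: "('a, 'k::field) rmod \<times> ('a, 'k) rmod \<Rightarrow> ('a, 'k) rmod \<Rightarrow> int" where
  "pairing \<theta> M = int (mdim (hom (fst \<theta>) M)) - int (mdim (hom (snd \<theta>) M))"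

definition pairing_sub :: "('a, 'k::field) rmod \<times> ('a, 'k) rmod \<Rightarrow> ('a, 'k) rmod \<Rightarrow> 'k rvec set \<Rightarrow> int" where
  "pairing_sub \<theta> M U = int (mdim (hom_into (fst \<theta>) M U)) - int (mdim (hom_into (snd \<theta>) M U))"

text \<open>Dimension vector [M] in K_0(mod A), encoded by its (perfect) pairing with
  K_0(proj A): [M] is determined by P |-> dim Hom(P, M) for projective P.\<close>

definition dimvec :: "('k::field \<Rightarrow> 'a::ring_1 \<Rightarrow> 'a) \<Rightarrow> ('a, 'k) rmod \<Rightarrow> (('a, 'k) rmod \<Rightarrow> nat)" where
  "dimvec sc M = (\<lambda>P. if is_proj sc P then mdim (hom P M) else 0)"

definition theta_stable ::
  "('k::field \<Rightarrow> 'a::ring_1 \<Rightarrow> 'a) \<Rightarrow> ('a, 'k) rmod \<times> ('a, 'k) rmod \<Rightarrow> ('a, 'k) rmod \<Rightarrow> bool" where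
  "theta_stable sc \<theta> M \<longleftrightarrow> is_rmod sc M \<and> pairing \<theta> M = 0 \<and>
     (\<forall>U. submod M U \<longrightarrow> U \<noteq> {\<lambda>i. 0} \<longrightarrow> U \<noteq> {v. vec_on (fst M) v}
        \<longrightarrow> pairing_sub \<theta> M U < 0)"

definition stable_classes ::
  "('k::field \<Rightarrow> 'a::ring_1 \<Rightarrow> 'a) \<Rightarrow> ('a, 'k) rmod \<times> ('a, 'k) rmod \<Rightarrow> (('a, 'k) rmod \<Rightarrow> nat)
     \<Rightarrow> ('a, 'k) rmod set set" where
  "stable_classes sc \<theta> d =
     (\<lambda>M. {N. is_rmod sc N \<and> iso_mod M N}) ` {M. theta_stable sc \<theta> M \<and> dimvec sc M = d}"

end

theory Submission
  imports Defs "HOL-Library.Function_Algebras"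
begin

lemma mmul_assoc: "mmul n (mmul m A B) C = mmul m A (mmul n B C)"
  unfolding mmul_def
  by (auto simp: sum_distrib_left sum_distrib_right mult.assoc intro!: ext sum.swap)

lemma mat_onD: "mat_on r c A \<Longrightarrow> r \<le> i \<or> c \<le> j \<Longrightarrow> A i j = 0"
  unfolding mat_on_def by blast

lemma mat_on_mmul: "mat_on r n A \<Longrightarrow> mat_on n c B \<Longrightarrow> mat_on r c (mmul n A B)"
  unfolding mat_on_def mmul_def by auto

lemma mat_on_mmul': "mat_on r n A \<Longrightarrow> mat_on m c B \<Longrightarrow> mat_on r c (mmul k A B)"
  unfolding mat_on_def mmul_def by auto

lemma mmul_idm_left: "mat_on n c B \<Longrightarrow> mmul n (idm n) B = B"
proof (rule ext, rule ext)
  fix i j assume B: "mat_on n c B"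
  show "mmul n (idm n) B i j = B i j"
  proof (cases "i < n")
    case True
    then show ?thesis unfolding mmul_def idm_def
      by (simp add: if_distrib[of "\<lambda>x. x * _"] sum.delta cong: if_cong)
  next
    case False
    then show ?thesis using B unfolding mmul_def idm_def mat_on_def by auto
  qed
qed

lemma mmul_idm_right: "mat_on r n A \<Longrightarrow> mmul n A (idm n) = A"
proof (rule ext, rule ext)
  fix i j assume A: "mat_on r n A"
  show "mmul n A (idm n) i j = A i j"
  proof (cases "j < n")
    case True
    then show ?thesis unfolding mmul_def idm_def
      by (simp add: if_distrib[of "\<lambda>x. _ * x"] sum.delta' cong: if_cong)
  next
    case False
    then show ?thesis using A unfolding mmul_def idm_def mat_on_def by auto
  qed
qed

lemma mat_on_idm: "mat_on n n (idm n)"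
  unfolding mat_on_def idm_def by auto

lemma vmul_mmul: "vmul m (vmul n v A) B = vmul n v (mmul m A B)"
  unfolding vmul_def mmul_def
  by (auto simp: sum_distrib_left sum_distrib_right mult.assoc intro!: ext sum.swap)

lemma vec_on_vmul: "mat_on r c A \<Longrightarrow> vec_on c (vmul k v A)"
  unfolding vec_on_def vmul_def mat_on_def by auto

definition uvec :: "nat \<Rightarrow> 'k::zero_neq_one rvec" where
  "uvec i = (\<lambda>j. if j = i then 1 else 0)"

lemma vec_on_uvec: "i < n \<Longrightarrow> vec_on n (uvec i)"
  unfolding vec_on_def uvec_def by auto

lemma vmul_uvec: "i < n \<Longrightarrow> vmul n (uvec i) A = A i"
  unfolding vmul_def uvec_def
  by (auto intro!: ext simp: if_distrib[of "\<lambda>x. x * _"] sum.delta cong: if_cong)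

lemma vmul_idm: "vec_on n v \<Longrightarrow> vmul n v (idm n) = v"
  unfolding vmul_def idm_def vec_on_def
  by (auto intro!: ext simp: if_distrib[of "\<lambda>x. _ * x"] sum.delta' cong: if_cong)

lemma mat_eqI_vmul:
  assumes "mat_on n c A" "mat_on n c' B" "\<And>v. vec_on n v \<Longrightarrow> vmul n v A = vmul n v B"
  shows "A = B"
proof (rule ext)
  fix i show "A i = B i"
  proof (cases "i < n")
    case True
    then show ?thesis using assms(3)[OF vec_on_uvec[OF True]] by (simp add: vmul_uvec)
  next
    case False
    then show ?thesis using assms(1,2) unfolding mat_on_def by auto
  qed
qed

lemma mmul_add_left: "mmul n (A + B) C = mmul n A C + mmul n B C"
  unfolding mmul_def by (auto intro!: ext simp: distrib_right sum.distrib)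

lemma mmul_add_right: "mmul n A (B + C) = mmul n A B + mmul n A C"
  unfolding mmul_def by (auto intro!: ext simp: distrib_left sum.distrib)

definition msc :: "'k::comm_ring_1 \<Rightarrow> 'k mtx \<Rightarrow> 'k mtx" where
  "msc c A = (\<lambda>i j. c * A i j)"

lemma mmul_msc_left: "mmul n (msc c A) B = msc c (mmul n A B)"
  unfolding mmul_def msc_def by (auto intro!: ext simp: sum_distrib_left mult.assoc)

lemma mmul_msc_right: "mmul n A (msc c B) = msc c (mmul n A B)"
  unfolding mmul_def msc_def by (auto intro!: ext simp: sum_distrib_left mult.assoc mult.left_commute)

lemma mmul_zero_left[simp]: "mmul n 0 B = 0" unfolding mmul_def by (auto intro!: ext)
lemma mmul_zero_right[simp]: "mmul n A 0 = 0" unfolding mmul_def by (auto intro!: ext)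
lemma mmul_zero_left'[simp]: "mmul n (\<lambda>i j. 0) B = (\<lambda>i j. 0)" unfolding mmul_def by (auto intro!: ext)
lemma mmul_zero_right'[simp]: "mmul n A (\<lambda>i j. 0) = (\<lambda>i j. 0)" unfolding mmul_def by (auto intro!: ext)

lemma mat_on_add: "mat_on r c (A::'k::comm_ring_1 mtx) \<Longrightarrow> mat_on r c B \<Longrightarrow> mat_on r c (A + B)"
  unfolding mat_on_def by auto
lemma mat_on_msc: "mat_on r c A \<Longrightarrow> mat_on r c (msc x A)"
  unfolding mat_on_def msc_def by auto
lemma mat_on_zero[simp]: "mat_on r c 0" unfolding mat_on_def by auto
lemma mat_on_zero'[simp]: "mat_on r c (\<lambda>i j. 0)" unfolding mat_on_def by auto

lemma vmul_add_right: "vmul n v (A + B) = vmul n v A + vmul n v B"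
  unfolding vmul_def by (auto intro!: ext simp: distrib_left sum.distrib)
lemma vmul_add_left: "vmul n (v + w) A = vmul n v A + vmul n w A"
  unfolding vmul_def by (auto intro!: ext simp: distrib_right sum.distrib)
lemma vmul_scale_left: "vmul n (\<lambda>i. c * v i) A = (\<lambda>j. c * vmul n v A j)"
  unfolding vmul_def by (auto intro!: ext simp: sum_distrib_left mult.assoc)
lemma vmul_zero_left[simp]: "vmul n (\<lambda>i. 0) A = (\<lambda>j. 0)"
  unfolding vmul_def by auto


lemma sum_fun_apply: "(sum f A) x = sum (\<lambda>a. f a x) A"
  by (induction A rule: infinite_finite_induct) auto

lemma vs_msc: "vector_space (msc :: 'k::field \<Rightarrow> 'k mtx \<Rightarrow> 'k mtx)"
  by unfold_locales (auto simp: msc_def algebra_simps intro!: ext)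

lemma lincomb_eq_sum: "(\<lambda>i j. \<Sum>l<n. c l * (xs ! l) i j) = (\<Sum>l<n. msc (c l) (xs ! l))"
  by (auto intro!: ext simp: sum_fun_apply msc_def)

definition unitm :: "nat \<Rightarrow> nat \<Rightarrow> 'k::zero_neq_one mtx" where
  "unitm i j = (\<lambda>a b. if a = i \<and> b = j then 1 else 0)"

lemma lin_ind_distinct:
  fixes xs :: "'k::field mtx list"
  assumes "lin_ind xs" shows "distinct xs"
proof (rule ccontr)
  assume "\<not> distinct xs"
  then obtain a b where ab: "a < length xs" "b < length xs" "a \<noteq> b" "xs ! a = xs ! b"
    using distinct_conv_nth by blast
  define c where "c l = (if l = a then 1 else if l = b then -1 else (0::'k))" for l
  have "(\<lambda>i j. \<Sum>l<length xs. c l * (xs ! l) i j) = (\<lambda>i j. 0)"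
  proof (intro ext)
    fix i j
    have "(\<Sum>l<length xs. c l * (xs ! l) i j) = (\<Sum>l\<in>{a,b}. c l * (xs ! l) i j)"
      by (rule sum.mono_neutral_right) (use ab in \<open>auto simp: c_def\<close>)
    also have "\<dots> = 0" using ab by (simp add: c_def)
    finally show "(\<Sum>l<length xs. c l * (xs ! l) i j) = 0" .
  qed
  with assms have "c a = 0" using ab unfolding lin_ind_def by blast
  then show False by (simp add: c_def)
qed

lemma lin_ind_independent:
  fixes xs :: "'k::field mtx list"
  assumes "lin_ind xs" shows "\<not> module.dependent msc (set xs)"
proof -
  interpret V: vector_space "msc :: 'k \<Rightarrow> 'k mtx \<Rightarrow> 'k mtx" by (rule vs_msc)
  have dist: "distinct xs" using assms by (rule lin_ind_distinct)
  show ?thesis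
    unfolding V.independent_explicit_module
  proof (intro allI impI)
    fix t u v assume t: "finite t" "t \<subseteq> set xs" "(\<Sum>v\<in>t. msc (u v) v) = 0" "v \<in> t"
    define c where "c l = (if xs ! l \<in> t then u (xs ! l) else 0)" for l
    have inj: "inj_on (nth xs) {..<length xs}" using dist by (simp add: inj_on_nth)
    have img: "nth xs ` {..<length xs} = set xs" by (auto simp: set_conv_nth)
    have "(\<Sum>l<length xs. msc (c l) (xs ! l)) = (\<Sum>w\<in>set xs. msc (if w \<in> t then u w else 0) w)"
      unfolding img[symmetric] by (subst sum.reindex[OF inj]) (simp add: c_def)
    also have "\<dots> = (\<Sum>w\<in>t. msc (u w) w)"
      by (rule sum.mono_neutral_cong_right) (use t in \<open>auto simp: msc_def intro!: ext\<close>)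
    finally have "(\<lambda>i j. \<Sum>l<length xs. c l * (xs ! l) i j) = (\<lambda>i j. 0)"
      using t(3) by (simp add: lincomb_eq_sum zero_fun_def)
    then have "\<forall>l<length xs. c l = 0" using assms unfolding lin_ind_def by blast
    moreover obtain l where "l < length xs" "xs ! l = v" using t by (auto simp: set_conv_nth)
    ultimately show "u v = 0" using t by (auto simp: c_def)
  qed
qed

lemma lin_ind_bound:
  fixes xs :: "'k::field mtx list"
  assumes "lin_ind xs" "\<forall>X\<in>set xs. mat_on r c X"
  shows "length xs \<le> r * c"
proof -
  interpret V: vector_space "msc :: 'k \<Rightarrow> 'k mtx \<Rightarrow> 'k mtx" by (rule vs_msc)
  let ?U = "(\<lambda>(i,j). unitm i j :: 'k mtx) ` ({..<r} \<times> {..<c})"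
  have fin: "finite ?U" by auto
  have cardU: "card ?U \<le> r * c"
    using card_image_le[of "{..<r} \<times> {..<c}" "\<lambda>(i,j). unitm i j :: 'k mtx"] by (simp add: card_cartesian_product)
  have sp: "set xs \<subseteq> V.span ?U"
  proof
    fix X assume X: "X \<in> set xs"
    then have mo: "mat_on r c X" using assms by auto
    have "X = (\<Sum>p\<in>{..<r} \<times> {..<c}. msc (X (fst p) (snd p)) (unitm (fst p) (snd p)))"
    proof (intro ext)
      fix a b
      show "X a b = (\<Sum>p\<in>{..<r} \<times> {..<c}. msc (X (fst p) (snd p)) (unitm (fst p) (snd p))) a b"
      proof (cases "a < r \<and> b < c")
        case True
        have "(\<Sum>p\<in>{..<r} \<times> {..<c}. msc (X (fst p) (snd p)) (unitm (fst p) (snd p))) a b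
              = (\<Sum>p\<in>{..<r} \<times> {..<c}. if p = (a,b) then X a b else 0)"
          unfolding sum_fun_apply by (rule sum.cong) (auto simp: msc_def unitm_def)
        also have "\<dots> = X a b" using True by (simp add: sum.delta')
        finally show ?thesis by simp
      next
        case False
        then have "X a b = 0" using mo unfolding mat_on_def by auto
        moreover have "(\<Sum>p\<in>{..<r} \<times> {..<c}. msc (X (fst p) (snd p)) (unitm (fst p) (snd p))) a b = 0"
          unfolding sum_fun_apply by (rule sum.neutral) (use False in \<open>auto simp: msc_def unitm_def\<close>)
        ultimately show ?thesis by simp
      qed
    qed
    also have "\<dots> \<in> V.span ?U"
      by (intro V.span_sum V.span_scale V.span_base) auto
    finally show "X \<in> V.span ?U" .
  qed
  have "card (set xs) \<le> card ?U"
    using V.independent_span_bound[OF fin lin_ind_independent[OF assms(1)] sp] by simp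
  moreover have "card (set xs) = length xs"
    using lin_ind_distinct[OF assms(1)] by (simp add: distinct_card)
  ultimately show ?thesis using cardU by simp
qed

definition bnd :: "'k::zero mtx set \<Rightarrow> bool" where
  "bnd S \<longleftrightarrow> (\<exists>r c. \<forall>X\<in>S. mat_on r c X)"

lemma mdim_props:
  fixes S :: "'k::field mtx set"
  assumes "bnd S"
  shows "\<exists>xs. length xs = mdim S \<and> set xs \<subseteq> S \<and> lin_ind xs"
    and "lin_ind xs \<Longrightarrow> set xs \<subseteq> S \<Longrightarrow> length xs \<le> mdim S"
proof -
  obtain r c where rc: "\<forall>X\<in>S. mat_on r c X" using assms unfolding bnd_def by blast
  let ?P = "\<lambda>k. \<exists>xs. length xs = k \<and> set xs \<subseteq> S \<and> lin_ind (xs :: 'k mtx list)"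
  have b: "\<And>y. ?P y \<Longrightarrow> y \<le> r * c" using lin_ind_bound rc by blast
  have p0: "?P 0" by (rule exI[of _ "[]"]) (simp add: lin_ind_def)
  show "\<exists>xs. length xs = mdim S \<and> set xs \<subseteq> S \<and> lin_ind xs"
    using GreatestI_nat[of ?P 0 "r*c", OF p0 b] unfolding mdim_def by simp
  show "lin_ind xs \<Longrightarrow> set xs \<subseteq> S \<Longrightarrow> length xs \<le> mdim S"
    using Greatest_le_nat[of ?P "length xs" "r*c", OF _ b] unfolding mdim_def by blast
qed

lemma mmul_lincomb:
  "mmul k B (\<lambda>i j. \<Sum>l<n. c l * (Y l) i j) = (\<lambda>i j. \<Sum>l<n. c l * (mmul k B (Y l)) i j)"
  unfolding mmul_def
  by (auto intro!: ext simp: sum_distrib_left mult.left_commute intro: sum.swap)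

lemma mdim_transfer_le:
  fixes S T :: "'k::field mtx set"
  assumes "bnd S" "bnd T"
    and "\<And>X. X \<in> S \<Longrightarrow> mmul k A X \<in> T"
    and "\<And>X. X \<in> S \<Longrightarrow> mmul k' B (mmul k A X) = X"
  shows "mdim S \<le> mdim T"
proof -
  obtain xs where xs: "length xs = mdim S" "set xs \<subseteq> S" "lin_ind xs"
    using mdim_props(1)[OF assms(1)] by blast
  let ?ys = "map (mmul k A) xs"
  have "set ?ys \<subseteq> T" using xs assms(3) by auto
  moreover have "lin_ind ?ys"
    unfolding lin_ind_def
  proof (rule allI, rule impI)
    fix c assume h: "(\<lambda>i j. \<Sum>l<length ?ys. c l * (?ys ! l) i j) = (\<lambda>i j. 0)"
    have "mmul k' B (\<lambda>i j. \<Sum>l<length xs. c l * (mmul k A (xs ! l)) i j) = (\<lambda>i j. 0)"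
      using h by simp
    then have "(\<lambda>i j. \<Sum>l<length xs. c l * (mmul k' B (mmul k A (xs ! l))) i j) = (\<lambda>i j. 0)"
      by (simp add: mmul_lincomb[where k=k' and B=B and n="length xs" and c=c and Y="\<lambda>l. mmul k A (xs ! l)"])
    moreover have "\<And>l. l < length xs \<Longrightarrow> mmul k' B (mmul k A (xs ! l)) = xs ! l"
      using assms(4) xs(2) nth_mem by blast
    then have "(\<lambda>i j. \<Sum>l<length xs. c l * (mmul k' B (mmul k A (xs ! l))) i j)
        = (\<lambda>i j. \<Sum>l<length xs. c l * (xs ! l) i j)"
      by (intro ext sum.cong) auto
    ultimately have "(\<lambda>i j. \<Sum>l<length xs. c l * (xs ! l) i j) = (\<lambda>i j. 0)"
      by simp
    then show "\<forall>l<length ?ys. c l = 0" using xs(3) unfolding lin_ind_def by simp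
  qed
  ultimately have "length ?ys \<le> mdim T" using mdim_props(2)[OF assms(2)] by blast
  then show ?thesis using xs by simp
qed

lemma mdim_transfer:
  fixes S T :: "'k::field mtx set"
  assumes "bnd S" "bnd T"
    and "\<And>X. X \<in> S \<Longrightarrow> mmul k A X \<in> T"
    and "\<And>X. X \<in> S \<Longrightarrow> mmul k' B (mmul k A X) = X"
    and "\<And>Y. Y \<in> T \<Longrightarrow> mmul k' B Y \<in> S"
    and "\<And>Y. Y \<in> T \<Longrightarrow> mmul k A (mmul k' B Y) = Y"
  shows "mdim S = mdim T"
  using mdim_transfer_le[of S T k A k' B] mdim_transfer_le[of T S k' B k A] assms
  by (meson le_antisym)


lemma hom_mat_on: "X \<in> hom (m, \<rho>) (n, \<sigma>) \<Longrightarrow> mat_on m n X"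
  unfolding hom_def by auto

lemma hom_eq: "mmul m (\<rho> a) X = mmul n X (\<sigma> a)" if "X \<in> hom (m, \<rho>) (n, \<sigma>)"
  using that unfolding hom_def by auto

lemma homI: "mat_on m n X \<Longrightarrow> (\<And>a. mmul m (\<rho> a) X = mmul n X (\<sigma> a)) \<Longrightarrow> X \<in> hom (m, \<rho>) (n, \<sigma>)"
  unfolding hom_def by auto

lemma bnd_hom: "bnd (hom (m, \<rho>) (n, \<sigma>))"
  unfolding bnd_def hom_def by auto

lemma bnd_subset: "bnd T \<Longrightarrow> S \<subseteq> T \<Longrightarrow> bnd S"
  unfolding bnd_def by blast

lemma hom_comp:
  assumes "X \<in> hom (m, \<rho>) (n, \<sigma>)" "Y \<in> hom (n, \<sigma>) (p, \<tau>)"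
  shows "mmul n X Y \<in> hom (m, \<rho>) (p, \<tau>)"
proof (rule homI)
  show "mat_on m p (mmul n X Y)" using assms by (auto intro: mat_on_mmul hom_mat_on)
  fix a
  have "mmul m (\<rho> a) (mmul n X Y) = mmul n (mmul m (\<rho> a) X) Y" by (simp add: mmul_assoc)
  also have "\<dots> = mmul n (mmul n X (\<sigma> a)) Y" using hom_eq[OF assms(1)] by simp
  also have "\<dots> = mmul n X (mmul n (\<sigma> a) Y)" by (simp add: mmul_assoc)
  also have "\<dots> = mmul n X (mmul p Y (\<tau> a))" using hom_eq[OF assms(2)] by simp
  also have "\<dots> = mmul p (mmul n X Y) (\<tau> a)" by (simp add: mmul_assoc)
  finally show "mmul m (\<rho> a) (mmul n X Y) = mmul p (mmul n X Y) (\<tau> a)" .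
qed

lemma rmodD:
  assumes "is_rmod sc (n, \<rho>)"
  shows "mat_on n n (\<rho> a)" "\<rho> 1 = idm n" "\<rho> (a * b) = mmul n (\<rho> a) (\<rho> b)"
    "\<rho> (a + b) = \<rho> a + \<rho> b" "\<rho> (sc c a) = msc c (\<rho> a)"
  using assms unfolding is_rmod_def by (auto simp: msc_def plus_fun_def)

lemma idm_hom: assumes "is_rmod sc (n, \<rho>)" shows "idm n \<in> hom (n, \<rho>) (n, \<rho>)"
proof (rule homI)
  show "mat_on n n (idm n)" by (rule mat_on_idm)
  fix a have "mat_on n n (\<rho> a)" using rmodD(1)[OF assms] .
  then show "mmul n (\<rho> a) (idm n) = mmul n (idm n) (\<rho> a)" by (simp add: mmul_idm_left mmul_idm_right)
qed

lemma hom_add: "X \<in> hom (m, \<rho>) (n, \<sigma>) \<Longrightarrow> Y \<in> hom (m, \<rho>) (n, \<sigma>) \<Longrightarrow> X + Y \<in> hom (m, \<rho>) (n, \<sigma>)"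
  unfolding hom_def by (auto simp: mat_on_add mmul_add_left mmul_add_right)

lemma hom_msc: "X \<in> hom (m, \<rho>) (n, \<sigma>) \<Longrightarrow> msc c X \<in> hom (m, \<rho>) (n, \<sigma>)"
  unfolding hom_def by (auto simp: mat_on_msc mmul_msc_left mmul_msc_right)

lemma hom_zero: "(0::'k::field mtx) \<in> hom (m, \<rho>) (n, \<sigma>)"
  unfolding hom_def by auto

definition fixset :: "('a, 'k::field) rmod \<Rightarrow> ('a, 'k) rmod \<Rightarrow> 'k mtx \<Rightarrow> 'k rvec set \<Rightarrow> 'k mtx set" where
  "fixset X Z E U = {\<phi> \<in> hom X Z. mmul (fst X) E \<phi> = \<phi> \<and> (\<forall>v. vec_on (fst X) v \<longrightarrow> vmul (fst X) v \<phi> \<in> U)}"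

lemma split_mdim:
  fixes g s :: "'k::field mtx"
  assumes g: "g \<in> hom (ny, \<rho>y) (nx, \<rho>x)" and s: "s \<in> hom (nx, \<rho>x) (ny, \<rho>y)"
    and sg: "mmul ny s g = idm nx"
  shows "mdim (hom_into (nx, \<rho>x) (nz, \<rho>z) U) = mdim (fixset (ny, \<rho>y) (nz, \<rho>z) (mmul nx g s) U)"
proof (rule mdim_transfer[where k=nx and A=g and k'=ny and B=s])
  show "bnd (hom_into (nx, \<rho>x) (nz, \<rho>z) U)"
    by (rule bnd_subset[OF bnd_hom]) (auto simp: hom_into_def)
  show "bnd (fixset (ny, \<rho>y) (nz, \<rho>z) (mmul nx g s) U)"
    by (rule bnd_subset[OF bnd_hom]) (auto simp: fixset_def)
  have gm: "mat_on ny nx g" using g by (rule hom_mat_on)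
  have sm: "mat_on nx ny s" using s by (rule hom_mat_on)
  have bk: "mmul ny s (mmul nx g X) = X" if "X \<in> hom_into (nx, \<rho>x) (nz, \<rho>z) U" for X
  proof -
    have "mat_on nx nz X" using that by (auto simp: hom_into_def intro: hom_mat_on)
    then show ?thesis by (simp add: mmul_assoc[symmetric] sg mmul_idm_left)
  qed
  show "mmul ny s (mmul nx g X) = X" if "X \<in> hom_into (nx, \<rho>x) (nz, \<rho>z) U" for X
    using bk[OF that] .
  show "mmul nx g X \<in> fixset (ny, \<rho>y) (nz, \<rho>z) (mmul nx g s) U" if X: "X \<in> hom_into (nx, \<rho>x) (nz, \<rho>z) U" for X
  proof -
    have h: "X \<in> hom (nx, \<rho>x) (nz, \<rho>z)" using X by (simp add: hom_into_def)
    have "mmul ny (mmul nx g s) (mmul nx g X) = mmul nx g X"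
      using bk[OF X] by (simp add: mmul_assoc)
    moreover have "vmul ny v (mmul nx g X) \<in> U" if "vec_on ny v" for v
      using X vec_on_vmul[OF gm] by (auto simp: hom_into_def vmul_mmul[symmetric])
    ultimately show ?thesis using hom_comp[OF g h] by (auto simp: fixset_def)
  qed
  have fwd: "mmul nx g (mmul ny s Y) = Y" if "Y \<in> fixset (ny, \<rho>y) (nz, \<rho>z) (mmul nx g s) U" for Y
    using that by (simp add: fixset_def mmul_assoc)
  show "mmul nx g (mmul ny s Y) = Y" if "Y \<in> fixset (ny, \<rho>y) (nz, \<rho>z) (mmul nx g s) U" for Y
    using fwd[OF that] .
  show "mmul ny s Y \<in> hom_into (nx, \<rho>x) (nz, \<rho>z) U" if Y: "Y \<in> fixset (ny, \<rho>y) (nz, \<rho>z) (mmul nx g s) U" for Y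
  proof -
    have h: "Y \<in> hom (ny, \<rho>y) (nz, \<rho>z)" using Y by (simp add: fixset_def)
    have "vmul nx v (mmul ny s Y) \<in> U" if "vec_on nx v" for v
      using Y vec_on_vmul[OF sm] by (auto simp: fixset_def vmul_mmul[symmetric])
    then show ?thesis using hom_comp[OF s h] by (auto simp: hom_into_def)
  qed
qed

definition res :: "('a \<Rightarrow> 'b) \<Rightarrow> ('b, 'k) rmod \<Rightarrow> ('a, 'k) rmod" where
  "res f M = (fst M, \<lambda>a. snd M (f a))"

lemma res_pair[simp]: "res f (n, \<rho>) = (n, \<lambda>a. \<rho> (f a))"
  by (simp add: res_def)

lemma hom_res: "X \<in> hom (m, \<rho>) (n, \<sigma>) \<Longrightarrow> X \<in> hom (m, \<lambda>a. \<rho> (f a)) (n, \<lambda>a. \<sigma> (f a))"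
  unfolding hom_def by auto

lemma hom_res_eq: "surj f \<Longrightarrow> hom (m, \<lambda>a. \<rho> (f a)) (n, \<lambda>a. \<sigma> (f a)) = hom (m, \<rho>) (n, \<sigma>)"
  unfolding hom_def by (auto, metis surjD)

lemma reduce_mdim:
  fixes \<pi> \<tau> E \<epsilon> :: "'k::field mtx"
  assumes pi: "\<pi> \<in> hom (m, \<rho>F) (m', \<lambda>a. \<rho>F' (f a))"
    and tau: "mat_on m' m \<tau>" and tp: "mmul m \<tau> \<pi> = idm m'"
    and E: "E \<in> hom (m, \<rho>F) (m, \<rho>F)" and eps: "\<epsilon> \<in> hom (m', \<rho>F') (m', \<rho>F')"
    and comm: "mmul m E \<pi> = mmul m' \<pi> \<epsilon>"
    and fact: "\<And>\<phi>. \<phi> \<in> hom (m, \<rho>F) (n, \<lambda>a. \<sigma> (f a)) \<Longrightarrow> \<exists>\<phi>'\<in>hom (m', \<rho>F') (n, \<sigma>). \<phi> = mmul m' \<pi> \<phi>'"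
  shows "mdim (fixset (m', \<rho>F') (n, \<sigma>) \<epsilon> U) = mdim (fixset (m, \<rho>F) (n, \<lambda>a. \<sigma> (f a)) E U)"
proof (rule mdim_transfer[where k=m' and A=\<pi> and k'=m and B=\<tau>])
  show "bnd (fixset (m', \<rho>F') (n, \<sigma>) \<epsilon> U)"
    by (rule bnd_subset[OF bnd_hom]) (auto simp: fixset_def)
  show "bnd (fixset (m, \<rho>F) (n, \<lambda>a. \<sigma> (f a)) E U)"
    by (rule bnd_subset[OF bnd_hom]) (auto simp: fixset_def)
  have pim: "mat_on m m' \<pi>" using pi by (rule hom_mat_on)
  have bk: "mmul m \<tau> (mmul m' \<pi> X) = X" if "mat_on m' n X" for X
    using that by (simp add: mmul_assoc[symmetric] tp mmul_idm_left)
  show "mmul m \<tau> (mmul m' \<pi> X) = X" if "X \<in> fixset (m', \<rho>F') (n, \<sigma>) \<epsilon> U" for X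
    using that by (intro bk) (auto simp: fixset_def intro: hom_mat_on)
  show "mmul m' \<pi> X \<in> fixset (m, \<rho>F) (n, \<lambda>a. \<sigma> (f a)) E U" if X: "X \<in> fixset (m', \<rho>F') (n, \<sigma>) \<epsilon> U" for X
  proof -
    have h: "X \<in> hom (m', \<lambda>a. \<rho>F' (f a)) (n, \<lambda>a. \<sigma> (f a))" using X by (auto simp: fixset_def intro: hom_res)
    have "mmul m E (mmul m' \<pi> X) = mmul m' \<pi> X"
      using X by (simp add: mmul_assoc[symmetric] comm) (simp add: mmul_assoc fixset_def)
    moreover have "vmul m v (mmul m' \<pi> X) \<in> U" if "vec_on m v" for v
      using X vec_on_vmul[OF pim] by (auto simp: fixset_def vmul_mmul[symmetric])
    ultimately show ?thesis using hom_comp[OF pi h] by (auto simp: fixset_def)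
  qed
  have both: "mmul m' \<pi> (mmul m \<tau> Y) = Y \<and> mmul m \<tau> Y \<in> fixset (m', \<rho>F') (n, \<sigma>) \<epsilon> U"
    if Y: "Y \<in> fixset (m, \<rho>F) (n, \<lambda>a. \<sigma> (f a)) E U" for Y
  proof -
    have h: "Y \<in> hom (m, \<rho>F) (n, \<lambda>a. \<sigma> (f a))" using Y by (simp add: fixset_def)
    obtain X where X: "X \<in> hom (m', \<rho>F') (n, \<sigma>)" "Y = mmul m' \<pi> X" using fact[OF h] by blast
    have Xm: "mat_on m' n X" using X(1) by (rule hom_mat_on)
    have tY: "mmul m \<tau> Y = X" using X(2) bk[OF Xm] by simp
    have epsm: "mat_on m' m' \<epsilon>" using eps by (rule hom_mat_on)
    have "mmul m' \<pi> (mmul m' \<epsilon> X) = mmul m' \<pi> X"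
    proof -
      have "mmul m' \<pi> (mmul m' \<epsilon> X) = mmul m' (mmul m E \<pi>) X"
        by (simp add: comm mmul_assoc)
      also have "\<dots> = mmul m E Y" using X(2) by (simp add: mmul_assoc)
      also have "\<dots> = Y" using Y by (simp add: fixset_def)
      finally show ?thesis using X(2) by simp
    qed
    then have "mmul m \<tau> (mmul m' \<pi> (mmul m' \<epsilon> X)) = mmul m \<tau> (mmul m' \<pi> X)" by simp
    then have eX: "mmul m' \<epsilon> X = X"
      using bk[OF Xm] bk[OF mat_on_mmul[OF epsm Xm]] by simp
    have "vmul m' w X \<in> U" if "vec_on m' w" for w
    proof -
      have "vmul m' w X = vmul m (vmul m' w \<tau>) Y" using tY by (simp add: vmul_mmul)
      moreover have "vec_on m (vmul m' w \<tau>)" using vec_on_vmul[OF tau] .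
      ultimately show ?thesis using Y by (auto simp: fixset_def)
    qed
    then show ?thesis using X tY eX by (auto simp: fixset_def)
  qed
  show "mmul m' \<pi> (mmul m \<tau> Y) = Y"
    if "Y \<in> fixset (m, \<rho>F) (n, \<lambda>a. \<sigma> (f a)) E U" for Y using both[OF that] by blast
  show "mmul m \<tau> Y \<in> fixset (m', \<rho>F') (n, \<sigma>) \<epsilon> U"
    if "Y \<in> fixset (m, \<rho>F) (n, \<lambda>a. \<sigma> (f a)) E U" for Y using both[OF that] by blast
qed


definition imgmod :: "nat \<Rightarrow> 'k::comm_ring_1 mtx \<Rightarrow> 'k mtx \<Rightarrow> ('a, 'k) rmod \<Rightarrow> ('a, 'k) rmod" where
  "imgmod r B C F = (r, \<lambda>a. mmul (fst F) B (mmul (fst F) (snd F a) C))"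

lemma imgmod_pair[simp]: "imgmod r B C (m, \<rho>) = (r, \<lambda>a. mmul m B (mmul m (\<rho> a) C))"
  by (simp add: imgmod_def)

lemma mmul_add_left': "mmul n (\<lambda>i j. A i j + B i j) C = mmul n A C + mmul n B C"
  using mmul_add_left[of n A B C] by (simp add: plus_fun_def)

context
  fixes sc :: "'k::field \<Rightarrow> 'a::ring_1 \<Rightarrow> 'a" and m r :: nat and \<rho> :: "'a \<Rightarrow> 'k mtx"
    and B C E :: "'k mtx"
  assumes F: "is_rmod sc (m, \<rho>)" and E: "E \<in> hom (m, \<rho>) (m, \<rho>)"
    and Bm: "mat_on r m B" and Cm: "mat_on m r C"
    and BC: "mmul m B C = idm r" and CB: "mmul r C B = E"
begin

private lemma rm: "mat_on m m (\<rho> a)" using rmodD(1)[OF F] .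

private lemma Em: "mat_on m m E" using E by (rule hom_mat_on)

private lemma BE: "mmul m B E = B"
proof -
  have "mmul m B E = mmul r (mmul m B C) B" using CB by (simp add: mmul_assoc)
  also have "\<dots> = B" using BC Bm by (simp add: mmul_idm_left)
  finally show ?thesis .
qed

private lemma EC: "mmul m E C = C"
proof -
  have "mmul m E C = mmul r C (mmul m B C)" by (simp add: mmul_assoc CB[symmetric])
  also have "\<dots> = C" using BC Cm by (simp add: mmul_idm_right)
  finally show ?thesis .
qed

private lemma CBW: "mmul r C (mmul m B W) = mmul m E W"
  using CB by (simp add: mmul_assoc[symmetric])

private lemma rE: "mmul m (\<rho> a) E = mmul m E (\<rho> a)"
  using hom_eq[OF E] .

lemma imgmod_rmod: "is_rmod sc (imgmod r B C (m, \<rho>))"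
proof -
  let ?P = "\<lambda>a. mmul m B (mmul m (\<rho> a) C)"
  have "mat_on r r (?P a)" for a using Bm Cm rm by (intro mat_on_mmul) auto
  moreover have "?P 1 = idm r"
    using rmodD(2)[OF F] Cm BC by (simp add: mmul_idm_left)
  moreover have "?P (a * b) = mmul r (?P a) (?P b)" for a b
  proof -
    have "mmul r (?P a) (?P b) = mmul m B (mmul m (\<rho> a) (mmul r C (mmul m B (mmul m (\<rho> b) C))))"
      by (simp add: mmul_assoc)
    also have "\<dots> = mmul m B (mmul m (\<rho> a) (mmul m E (mmul m (\<rho> b) C)))"
      by (simp add: CBW)
    also have "\<dots> = mmul m (mmul m B E) (mmul m (\<rho> a) (mmul m (\<rho> b) C))"
      by (simp add: mmul_assoc[symmetric] rE)
    also have "\<dots> = ?P (a * b)"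
      using rmodD(3)[OF F] by (simp add: BE mmul_assoc)
    finally show ?thesis by simp
  qed
  moreover have "?P (a + b) = (\<lambda>i j. ?P a i j + ?P b i j)" for a b
  proof -
    have "?P (a + b) = ?P a + ?P b" by (simp add: rmodD(4)[OF F] mmul_add_left mmul_add_right)
    then show ?thesis by (simp add: plus_fun_def)
  qed
  moreover have "?P (sc c a) = (\<lambda>i j. c * ?P a i j)" for c a
  proof -
    have "?P (sc c a) = msc c (?P a)" by (simp add: rmodD(5)[OF F] mmul_msc_left mmul_msc_right)
    then show ?thesis by (simp add: msc_def)
  qed
  ultimately show ?thesis unfolding is_rmod_def imgmod_def by auto
qed

lemma imgmod_C: "C \<in> hom (m, \<rho>) (imgmod r B C (m, \<rho>))"
  unfolding imgmod_pair
proof (rule homI[OF Cm])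
  fix a
  have "mmul r C (mmul m B (mmul m (\<rho> a) C)) = mmul m E (mmul m (\<rho> a) C)" by (rule CBW)
  also have "\<dots> = mmul m (\<rho> a) (mmul m E C)" by (simp add: mmul_assoc[symmetric] rE)
  also have "\<dots> = mmul m (\<rho> a) C" by (simp add: EC)
  finally show "mmul m (\<rho> a) C = mmul r C (mmul m B (mmul m (\<rho> a) C))" by simp
qed

lemma imgmod_B: "B \<in> hom (imgmod r B C (m, \<rho>)) (m, \<rho>)"
  unfolding imgmod_pair
proof (rule homI[OF Bm])
  fix a
  have "mmul r (mmul m B (mmul m (\<rho> a) C)) B = mmul m B (mmul m (\<rho> a) E)"
    by (simp add: mmul_assoc CB)
  also have "\<dots> = mmul m B (\<rho> a)" by (simp add: rE mmul_assoc[symmetric] BE)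
  finally show "mmul r (mmul m B (mmul m (\<rho> a) C)) B = mmul m B (\<rho> a)" .
qed

lemma imgmod_proj:
  assumes "is_proj sc (m, \<rho>)" shows "is_proj sc (imgmod r B C (m, \<rho>))"
  unfolding is_proj_def
proof (intro conjI allI impI)
  show "is_rmod sc (imgmod r B C (m, \<rho>))" by (rule imgmod_rmod)
  fix M N g h
  assume MN: "is_rmod sc M" "is_rmod sc N" "surj_hom M N g" "h \<in> hom (imgmod r B C (m, \<rho>)) N"
  obtain nM \<rho>M where M: "M = (nM, \<rho>M)" by fastforce
  obtain nN \<rho>N where N: "N = (nN, \<rho>N)" by fastforce
  have h: "h \<in> hom (r, \<lambda>a. mmul m B (mmul m (\<rho> a) C)) (nN, \<rho>N)" using MN(4) N by simp
  have Ch: "mmul r C h \<in> hom (m, \<rho>) N"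
    using hom_comp[OF imgmod_C[unfolded imgmod_pair] h] N by simp
  obtain k where k: "k \<in> hom (m, \<rho>) M" "mmul (fst M) k g = mmul r C h"
    using assms MN Ch unfolding is_proj_def by (metis fst_conv)
  have hm: "mat_on r nN h" using h by (rule hom_mat_on)
  have "mmul m B k \<in> hom (imgmod r B C (m, \<rho>)) M"
    using hom_comp[OF imgmod_B[unfolded imgmod_pair] k(1)[unfolded M]] M by simp
  moreover have "mmul (fst M) (mmul m B k) g = h"
  proof -
    have "mmul (fst M) (mmul m B k) g = mmul m B (mmul r C h)" by (simp add: mmul_assoc k(2))
    also have "\<dots> = h" using BC hm by (simp add: mmul_assoc[symmetric] mmul_idm_left)
    finally show ?thesis .
  qed
  ultimately show "\<exists>h'\<in>hom (imgmod r B C (m, \<rho>)) M. mmul (fst M) h' g = h" by blast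
qed

lemma imgmod_mdim:
  "mdim (hom_into (imgmod r B C (m, \<rho>)) (nz, \<rho>z) U) = mdim (fixset (m, \<rho>) (nz, \<rho>z) E U)"
  using split_mdim[OF imgmod_C[unfolded imgmod_pair] imgmod_B[unfolded imgmod_pair] BC, of nz \<rho>z U] CB
  by simp

end


definition vsc :: "'k::comm_ring_1 \<Rightarrow> 'k rvec \<Rightarrow> 'k rvec" where
  "vsc c v = (\<lambda>i. c * v i)"

lemma vs_vsc: "vector_space (vsc :: 'k::field \<Rightarrow> 'k rvec \<Rightarrow> 'k rvec)"
  by unfold_locales (auto simp: vsc_def algebra_simps intro!: ext)

lemma vmul_as_sum: "vmul m w E = (\<Sum>t<m. vsc (w t) (E t))"
  unfolding vmul_def by (auto intro!: ext simp: sum_fun_apply vsc_def)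

lemma rank_factorization:
  fixes E :: "'k::field mtx"
  assumes Em: "mat_on m m E" and EE: "mmul m E E = E"
  shows "\<exists>r B C. mat_on r m B \<and> mat_on m r C \<and> mmul m B C = idm r \<and> mmul r C B = E"
proof -
  interpret V: vector_space "vsc :: 'k \<Rightarrow> 'k rvec \<Rightarrow> 'k rvec" by (rule vs_vsc)
  let ?V = "E ` {..<m}"
  obtain Bs where Bs: "Bs \<subseteq> ?V" "V.independent Bs" "?V \<subseteq> V.span Bs" "card Bs = V.dim ?V"
    by (rule V.basis_exists[of ?V])
  have finB: "finite Bs" using Bs(1) finite_subset by blast
  obtain bl where bl: "set bl = Bs" "distinct bl" using finite_distinct_list[OF finB] by blast
  define r where "r = length bl"
  define B where "B = (\<lambda>i j. if i < r then (bl ! i) j else 0)"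
  define C where "C = (\<lambda>t i. if t < m \<and> i < r then V.representation Bs (E t) (bl ! i) else 0)"
  have rowon: "E t j = 0" if "m \<le> j" for t j using Em that unfolding mat_on_def by auto
  have blV: "bl ! i \<in> ?V" if "i < r" for i using Bs(1) bl that r_def nth_mem by blast
  have Bm: "mat_on r m B"
    unfolding mat_on_def B_def using blV rowon by fastforce
  have Cm: "mat_on m r C" unfolding mat_on_def C_def by auto
  have fixsp: "V.span ?V \<subseteq> {w. vmul m w E = w}"
  proof (rule V.span_minimal)
    show "?V \<subseteq> {w. vmul m w E = w}"
    proof
      fix w assume "w \<in> ?V"
      then obtain t where t: "t < m" "w = E t" by blast
      have "vmul m (E t) E = mmul m E E t" by (auto simp: vmul_def mmul_def)
      then show "w \<in> {w. vmul m w E = w}" using t EE by simp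
    qed
    show "V.subspace {w. vmul m w E = w}"
      unfolding V.subspace_def
    proof (intro conjI ballI allI)
      show "0 \<in> {w. vmul m w E = w}" by (simp add: zero_fun_def)
      show "x + y \<in> {w. vmul m w E = w}" if "x \<in> {w. vmul m w E = w}" "y \<in> {w. vmul m w E = w}" for x y
        using that by (simp add: vmul_add_left)
      show "vsc c x \<in> {w. vmul m w E = w}" if "x \<in> {w. vmul m w E = w}" for c x
        using that vmul_scale_left[of m c x E] by (simp add: vsc_def)
    qed
  qed
  have spanB: "V.span Bs \<subseteq> V.span ?V" using Bs(1) V.span_mono by blast
  have inspan: "E t \<in> V.span Bs" if "t < m" for t using Bs(3) that by blast
  have rep_lin: "V.representation Bs (vmul m w E) b = (\<Sum>t<m. w t * V.representation Bs (E t) b)" for w b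
  proof -
    have "V.representation Bs (vmul m w E) = (\<lambda>b. \<Sum>t<m. V.representation Bs (vsc (w t) (E t)) b)"
      unfolding vmul_as_sum by (rule V.representation_sum[OF Bs(2)]) (auto intro: V.span_scale inspan)
    then show ?thesis by (simp add: V.representation_scale[OF Bs(2) inspan])
  qed
  have BC: "mmul m B C = idm r"
  proof (intro ext)
    fix i i'
    show "mmul m B C i i' = idm r i i'"
    proof (cases "i < r \<and> i' < r")
      case True
      have "mmul m B C i i' = (\<Sum>t<m. (bl ! i) t * V.representation Bs (E t) (bl ! i'))"
        unfolding mmul_def B_def C_def using True by simp
      also have "\<dots> = V.representation Bs (vmul m (bl ! i) E) (bl ! i')" by (simp add: rep_lin)
      also have "vmul m (bl ! i) E = bl ! i" using fixsp V.span_base[OF blV] True by blast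
      also have "V.representation Bs (bl ! i) (bl ! i') = (if i = i' then 1 else 0)"
        using V.representation_basis[OF Bs(2), of "bl ! i"] True bl nth_eq_iff_index_eq r_def by fastforce
      finally show ?thesis using True by (simp add: idm_def)
    next
      case False
      then show ?thesis unfolding mmul_def B_def C_def idm_def by auto
    qed
  qed
  have CB: "mmul r C B = E"
  proof (intro ext)
    fix t j
    show "mmul r C B t j = E t j"
    proof (cases "t < m")
      case True
      have inj: "inj_on (nth bl) {..<r}" using bl by (simp add: inj_on_nth r_def)
      have img: "nth bl ` {..<r} = Bs" using bl by (auto simp: set_conv_nth r_def)
      have "mmul r C B t j = (\<Sum>i<r. V.representation Bs (E t) (bl ! i) * (bl ! i) j)"
        unfolding mmul_def B_def C_def using True by simp
      also have "\<dots> = (\<Sum>b\<in>Bs. V.representation Bs (E t) b * b j)"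
        unfolding img[symmetric] by (simp add: sum.reindex[OF inj])
      also have "\<dots> = (\<Sum>b\<in>Bs. vsc (V.representation Bs (E t) b) b) j"
        by (simp add: sum_fun_apply vsc_def)
      also have "(\<Sum>b\<in>Bs. vsc (V.representation Bs (E t) b) b) = E t"
        by (rule V.sum_representation_eq[OF Bs(2) inspan[OF True] finB]) simp
      finally show ?thesis .
    next
      case False
      then show ?thesis using Em unfolding mmul_def C_def mat_on_def by auto
    qed
  qed
  show ?thesis using Bm Cm BC CB by blast
qed


primrec mpow :: "nat \<Rightarrow> 'k::comm_ring_1 mtx \<Rightarrow> nat \<Rightarrow> 'k mtx" where
  "mpow m A 0 = idm m"
| "mpow m A (Suc t) = mmul m A (mpow m A t)"

definition peval :: "nat \<Rightarrow> 'k::comm_ring_1 poly \<Rightarrow> 'k mtx \<Rightarrow> 'k mtx" where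
  "peval m p A = (\<Sum>t\<le>degree p. msc (coeff p t) (mpow m A t))"

lemma msc_zero[simp]: "msc 0 A = 0" by (auto simp: msc_def intro!: ext)
lemma msc_add: "msc (a + b) A = msc a A + msc b A" by (auto simp: msc_def algebra_simps intro!: ext)
lemma msc_add_right: "msc a (A + B) = msc a A + msc a B" by (auto simp: msc_def algebra_simps intro!: ext)
lemma msc_msc: "msc a (msc b A) = msc (a * b) A" by (auto simp: msc_def algebra_simps intro!: ext)
lemma msc_one[simp]: "msc 1 A = A" by (auto simp: msc_def intro!: ext)
lemma msc_sum_left: "msc (\<Sum>i\<in>I. f i) A = (\<Sum>i\<in>I. msc (f i) A)"
  by (induction I rule: infinite_finite_induct) (auto simp: msc_add)
lemma msc_sum_right: "msc a (\<Sum>i\<in>I. f i) = (\<Sum>i\<in>I. msc a (f i))"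
proof (induction I rule: infinite_finite_induct)
  case (insert x F)
  then show ?case by (simp only: sum.insert[OF insert(1,2)] msc_add_right)
qed (auto simp: msc_def zero_fun_def)

lemma mmul_sum_right: "mmul n A (\<Sum>i\<in>I. X i) = (\<Sum>i\<in>I. mmul n A (X i))"
proof (induction I rule: infinite_finite_induct)
  case (insert x F)
  then show ?case by (simp only: sum.insert[OF insert(1,2)] mmul_add_right)
qed auto
lemma mmul_sum_left: "mmul n (\<Sum>i\<in>I. X i) B = (\<Sum>i\<in>I. mmul n (X i) B)"
proof (induction I rule: infinite_finite_induct)
  case (insert x F)
  then show ?case by (simp only: sum.insert[OF insert(1,2)] mmul_add_left)
qed auto

lemma mat_on_sum: "(\<And>i. i \<in> I \<Longrightarrow> mat_on r c (X i :: 'k::comm_ring_1 mtx)) \<Longrightarrow> mat_on r c (\<Sum>i\<in>I. X i)"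
  by (induction I rule: infinite_finite_induct) (auto simp: mat_on_add)

lemma mat_on_mpow: "mat_on m m A \<Longrightarrow> mat_on m m (mpow m A t)"
  by (induction t) (auto simp: mat_on_idm intro: mat_on_mmul)

lemma mat_on_peval: "mat_on m m A \<Longrightarrow> mat_on m m (peval m p A)"
  unfolding peval_def by (intro mat_on_sum mat_on_msc mat_on_mpow)

lemma peval_bound:
  assumes "degree p < L"
  shows "peval m p A = (\<Sum>t<L. msc (coeff p t) (mpow m A t))"
  unfolding peval_def
proof (rule sum.mono_neutral_left)
  show "\<forall>i\<in>{..<L} - {..degree p}. msc (coeff p i) (mpow m A i) = 0"
    using coeff_eq_0[of p] by auto
qed (use assms in auto)

lemma peval_add: "peval m (p + q) A = peval m p A + peval m q A"
proof -
  define L where "L = Suc (max (degree p) (degree q))"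
  have "degree (p + q) < L" "degree p < L" "degree q < L"
    using degree_add_le_max[of p q] by (auto simp: L_def)
  then show ?thesis
    by (simp add: peval_bound[of _ L] msc_add sum.distrib)
qed

lemma peval_smult: "peval m (smult c p) A = msc c (peval m p A)"
proof -
  define L where "L = Suc (degree p)"
  have "degree (smult c p) < L" "degree p < L"
    using degree_smult_le[of c p] by (auto simp: L_def)
  then show ?thesis
    by (simp add: peval_bound[of _ L] msc_sum_right msc_msc)
qed

lemma mmul_msc_idm: "mat_on m c X \<Longrightarrow> mmul m (msc a (idm m)) X = msc a X"
  by (simp add: mmul_msc_left mmul_idm_left)

lemma peval_pCons: "peval m (pCons a p) A = msc a (idm m) + mmul m A (peval m p A)"
proof -
  define L where "L = Suc (degree p)"
  have d1: "degree (pCons a p) < Suc L" using degree_pCons_le[of a p] by (simp add: L_def)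
  have d2: "degree p < L" by (simp add: L_def)
  have "peval m (pCons a p) A = (\<Sum>t<Suc L. msc (coeff (pCons a p) t) (mpow m A t))"
    by (rule peval_bound[OF d1])
  also have "\<dots> = msc a (idm m) + (\<Sum>t<L. msc (coeff p t) (mpow m A (Suc t)))"
    by (simp only: sum.lessThan_Suc_shift coeff_pCons_0 coeff_pCons_Suc mpow.simps(1))
  also have "(\<Sum>t<L. msc (coeff p t) (mpow m A (Suc t))) = mmul m A (peval m p A)"
    by (simp add: peval_bound[OF d2] mmul_sum_right mmul_msc_right)
  finally show ?thesis .
qed

lemma peval_zero[simp]: "peval m 0 A = 0"
  by (simp add: peval_def)

lemma peval_mult:
  assumes Am: "mat_on m m A"
  shows "peval m (p * q) A = mmul m (peval m p A) (peval m q A)"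
proof (induction p)
  case 0
  then show ?case by simp
next
  case (pCons a p)
  have qm: "mat_on m m (peval m q A)" by (rule mat_on_peval[OF Am])
  have "peval m (pCons a p * q) A = msc a (peval m q A) + (msc 0 (idm m) + mmul m A (peval m (p * q) A))"
    by (simp add: peval_add peval_smult peval_pCons del: msc_zero)
  also have "\<dots> = msc a (peval m q A) + mmul m A (mmul m (peval m p A) (peval m q A))"
    using pCons.IH by simp
  also have "\<dots> = mmul m (peval m (pCons a p) A) (peval m q A)"
    by (simp add: peval_pCons mmul_add_left mmul_msc_idm[OF qm] mmul_assoc)
  finally show ?case .
qed

lemma peval_hom:
  assumes F: "is_rmod sc (m, \<rho>)" and A: "A \<in> hom (m, \<rho>) (m, \<rho>)"
  shows "peval m p A \<in> hom (m, \<rho>) (m, \<rho>)"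
proof -
  have mp: "mpow m A t \<in> hom (m, \<rho>) (m, \<rho>)" for t
    by (induction t) (auto intro: idm_hom[OF F] hom_comp[OF A])
  then have "\<And>T. finite T \<Longrightarrow> (\<Sum>t\<in>T. msc (coeff p t) (mpow m A t)) \<in> hom (m, \<rho>) (m, \<rho>)"
  proof -
    fix T :: "nat set" assume "finite T"
    then show "(\<Sum>t\<in>T. msc (coeff p t) (mpow m A t)) \<in> hom (m, \<rho>) (m, \<rho>)"
    proof (induction T rule: finite_induct)
      case empty
      show ?case by (simp only: sum.empty) (rule hom_zero)
    next
      case (insert x F)
      show ?case by (simp only: sum.insert[OF insert(1,2)]) (rule hom_add[OF hom_msc[OF mp] insert.IH])
    qed
  qed
  then show ?thesis unfolding peval_def by blast
qed

lemma mpow_comm: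
  assumes pim: "mat_on m m' \<pi>" and comm: "mmul m A \<pi> = mmul m' \<pi> \<epsilon>"
  shows "mmul m (mpow m A t) \<pi> = mmul m' \<pi> (mpow m' \<epsilon> t)"
proof (induction t)
  case 0
  then show ?case using pim by (simp add: mmul_idm_left mmul_idm_right)
next
  case (Suc t)
  have "mmul m (mpow m A (Suc t)) \<pi> = mmul m A (mmul m' \<pi> (mpow m' \<epsilon> t))"
    by (simp add: mmul_assoc Suc)
  also have "\<dots> = mmul m' \<pi> (mpow m' \<epsilon> (Suc t))"
    by (simp add: mmul_assoc[symmetric] comm)
  finally show ?case .
qed

lemma peval_comm:
  assumes pim: "mat_on m m' \<pi>" and comm: "mmul m A \<pi> = mmul m' \<pi> \<epsilon>"
  shows "mmul m (peval m p A) \<pi> = mmul m' \<pi> (peval m' p \<epsilon>)"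
  unfolding peval_def
  by (simp only: mmul_sum_left mmul_sum_right mmul_msc_left mmul_msc_right mpow_comm[OF assms])

lemma mpow_idem: "mat_on m m \<epsilon> \<Longrightarrow> mmul m \<epsilon> \<epsilon> = \<epsilon> \<Longrightarrow> t > 0 \<Longrightarrow> mpow m \<epsilon> t = \<epsilon>"
proof (induction t)
  case 0 then show ?case by simp
next
  case (Suc t)
  then show ?case by (cases t) (auto simp: mmul_idm_right)
qed

lemma peval_idem:
  assumes "mat_on m m \<epsilon>" "mmul m \<epsilon> \<epsilon> = \<epsilon>" "poly p 0 = 0" "poly p 1 = 1"
  shows "peval m p \<epsilon> = \<epsilon>"
proof -
  have "msc (coeff p t) (mpow m \<epsilon> t) = msc (coeff p t) \<epsilon>" for t
    using assms mpow_idem[OF assms(1,2), of t] by (cases t) (auto simp: poly_0_coeff_0)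
  then have "peval m p \<epsilon> = msc (\<Sum>t\<le>degree p. coeff p t) \<epsilon>"
    unfolding peval_def by (simp add: msc_sum_left)
  also have "(\<Sum>t\<le>degree p. coeff p t) = poly p 1"
    by (simp add: poly_altdef)
  finally show ?thesis using assms by simp
qed

lemma annihilating_poly:
  fixes A :: "'k::field mtx"
  assumes Am: "mat_on m m A"
  shows "\<exists>g. g \<noteq> 0 \<and> peval m g A = 0"
proof -
  define L where "L = Suc (m * m)"
  define xs where "xs = map (mpow m A) [0..<L]"
  have "\<not> lin_ind xs"
  proof
    assume "lin_ind xs"
    moreover have "\<forall>X\<in>set xs. mat_on m m X" using mat_on_mpow[OF Am] by (auto simp: xs_def)
    ultimately have "length xs \<le> m * m" by (rule lin_ind_bound)
    then show False by (simp add: xs_def L_def)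
  qed
  then obtain c where c: "(\<lambda>i j. \<Sum>l<L. c l * (xs ! l) i j) = (\<lambda>i j. 0)" "\<exists>l<L. c l \<noteq> 0"
    unfolding lin_ind_def by (auto simp: xs_def)
  define g where "g = Poly (map c [0..<L])"
  have cg: "coeff g t = (if t < L then c t else 0)" for t
    by (simp add: g_def nth_default_def)
  have gnz: "g \<noteq> 0" using c(2) cg by (metis coeff_0)
  have dg: "degree g < L"
  proof -
    have "degree g \<le> L" using degree_Poly[of "map c [0..<L]"] by (simp add: g_def)
    moreover have "degree g \<noteq> L"
      using cg[of L] \<open>g \<noteq> 0\<close> leading_coeff_0_iff by fastforce
    ultimately show ?thesis by simp
  qed
  have "peval m g A = (\<Sum>t<L. msc (c t) (mpow m A t))"
    using dg by (simp add: peval_bound cg)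
  also have "\<dots> = (\<Sum>l<L. msc (c l) (xs ! l))"
    by (rule sum.cong) (auto simp: xs_def)
  also have "\<dots> = (\<lambda>i j. \<Sum>l<L. c l * (xs ! l) i j)"
    by (rule lincomb_eq_sum[symmetric])
  also have "\<dots> = 0" using c(1) by (simp add: zero_fun_def)
  finally show ?thesis using \<open>g \<noteq> 0\<close> by blast
qed


lemma idem_lift:
  fixes A \<pi> \<epsilon> :: "'k::field mtx"
  assumes Am: "mat_on m m A" and em: "mat_on m' m' \<epsilon>" and pim: "mat_on m m' \<pi>"
    and ee: "mmul m' \<epsilon> \<epsilon> = \<epsilon>" and comm: "mmul m A \<pi> = mmul m' \<pi> \<epsilon>"
  shows "\<exists>p. mmul m (peval m p A) (peval m p A) = peval m p A \<and> mmul m (peval m p A) \<pi> = mmul m' \<pi> \<epsilon>"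
proof -
  obtain g where g: "g \<noteq> 0" "peval m g A = 0" using annihilating_poly[OF Am] by blast
  define Y :: "'k poly" where "Y = [:-1, 1:]"
  define G where "G = g * ([:0, 1:] * Y)"
  have Gnz: "G \<noteq> 0" using g(1) unfolding G_def mult_eq_0_iff by (auto simp: Y_def)
  have GA: "peval m G A = 0" unfolding G_def by (simp only: peval_mult[OF Am] g(2) mmul_zero_left)
  have G0: "poly G 0 = 0" and G1: "poly G 1 = 0" by (simp_all add: G_def Y_def)
  define s where "s = order 1 G"
  obtain R where R: "G = Y ^ s * R" "\<not> Y dvd R"
    using order_decomp[OF Gnz, of 1] by (auto simp: Y_def s_def)
  have s0: "s \<noteq> 0" using G1 Gnz order_root[of G 1] by (simp add: s_def)
  define c where "c = poly R 1"
  have c0: "c \<noteq> 0" using R(2) poly_eq_0_iff_dvd[of R 1] by (simp add: c_def Y_def)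
  have R0: "poly R 0 = 0" using G0 R(1) by (simp add: Y_def)
  define N where "N = 1 - smult (inverse c) R"
  define p where "p = 1 - N ^ s"
  have p0: "poly p 0 = 0" by (simp add: p_def N_def R0)
  have p1: "poly p 1 = 1" using s0 by (simp add: p_def N_def c0 c_def[symmetric])
  have "R dvd p"
  proof -
    have "p = (1 - N) * (\<Sum>i<s. N ^ i)" unfolding p_def by (rule one_diff_power_eq)
    also have "1 - N = R * [:inverse c:]" by (simp add: N_def)
    finally have "p = R * ([:inverse c:] * (\<Sum>i<s. N ^ i))" by (simp add: mult.assoc)
    then show ?thesis by (rule dvdI)
  qed
  moreover have "Y ^ s dvd N ^ s"
  proof -
    have "poly N 1 = 0" by (simp add: N_def c0 c_def[symmetric])
    then have "Y dvd N" using poly_eq_0_iff_dvd[of N 1] by (simp add: Y_def)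
    then show ?thesis by (rule dvd_power_same)
  qed
  ultimately have "Y ^ s * R dvd N ^ s * p" by (rule mult_dvd_mono[rotated])
  moreover have "p * p - p = - (N ^ s * p)" by (simp add: p_def algebra_simps)
  ultimately have "G dvd p * p - p" using R(1) by simp
  then obtain w where w: "p * p - p = G * w" by blast
  have "p * p = G * w + p" using w by (simp add: algebra_simps)
  then have "peval m (p * p) A = peval m (G * w) A + peval m p A" by (simp add: peval_add)
  also have "peval m (G * w) A = 0" by (simp add: peval_mult[OF Am] GA)
  finally have idem: "mmul m (peval m p A) (peval m p A) = peval m p A"
    by (simp add: peval_mult[OF Am])
  have "mmul m (peval m p A) \<pi> = mmul m' \<pi> (peval m' p \<epsilon>)" by (rule peval_comm[OF pim comm])
  also have "peval m' p \<epsilon> = \<epsilon>" by (rule peval_idem[OF em ee p0 p1])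
  finally show ?thesis using idem by blast
qed


lemma rmod_zero:
  assumes "vector_space sc" "is_rmod sc (n, \<rho>)" shows "\<rho> 0 = 0"
proof -
  interpret V: vector_space sc by (rule assms(1))
  have "\<rho> (sc 0 0) = msc 0 (\<rho> 0)" by (rule rmodD(5)[OF assms(2)])
  moreover have "sc 0 0 = 0" by simp
  ultimately show ?thesis by simp
qed

lemma rmod_sum:
  assumes "vector_space sc" "is_rmod sc (n, \<rho>)" shows "\<rho> (\<Sum>l\<in>I. x l) = (\<Sum>l\<in>I. \<rho> (x l))"
proof (induction I rule: infinite_finite_induct)
  case (insert y F)
  then show ?case by (simp only: sum.insert[OF insert(1,2)] rmodD(4)[OF assms(2)])
qed (auto simp: rmod_zero[OF assms])

lemma vmul_sum_right: "vmul n v (\<Sum>l\<in>I. X l) = (\<Sum>l\<in>I. vmul n v (X l))"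
proof (induction I rule: infinite_finite_induct)
  case (insert y F)
  then show ?case by (simp only: sum.insert[OF insert(1,2)] vmul_add_right)
qed (auto simp: vmul_def zero_fun_def)

lemma vmul_msc_right: "vmul n v (msc c X) = (\<lambda>j. c * vmul n v X j)"
  unfolding vmul_def msc_def by (auto intro!: ext simp: sum_distrib_left mult.left_commute)

locale fdalg =
  fixes sc :: "'k::field \<Rightarrow> 'a::ring_1 \<Rightarrow> 'a" and bs :: "'a list"
  assumes vs: "vector_space sc"
    and dist: "distinct bs" and indep: "\<not> module.dependent sc (set bs)"
    and spanning: "module.span sc (set bs) = UNIV"
    and alg: "\<And>c x y. sc c (x * y) = sc c x * y" "\<And>c x y. sc c (x * y) = x * sc c y"
begin

interpretation V: vector_space sc by (rule vs)

abbreviation "N \<equiv> length bs"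

definition crd :: "'a \<Rightarrow> nat \<Rightarrow> 'k" where
  "crd a i = (if i < N then V.representation (set bs) a (bs ! i) else 0)"

lemma crd_out: "N \<le> i \<Longrightarrow> crd a i = 0" by (simp add: crd_def)

lemma inj_bs: "inj_on (nth bs) {..<N}" using dist by (simp add: inj_on_nth)
lemma img_bs: "nth bs ` {..<N} = set bs" by (auto simp: set_conv_nth)

lemma crd_expand: "(\<Sum>i<N. sc (crd a i) (bs ! i)) = a"
proof -
  have "(\<Sum>i<N. sc (crd a i) (bs ! i)) = (\<Sum>i<N. sc (V.representation (set bs) a (bs ! i)) (bs ! i))"
    by (simp add: crd_def)
  also have "\<dots> = (\<Sum>b\<in>set bs. sc (V.representation (set bs) a b) b)"
    unfolding img_bs[symmetric] by (simp add: sum.reindex[OF inj_bs])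
  also have "\<dots> = a" by (rule V.sum_representation_eq) (use indep spanning in auto)
  finally show ?thesis .
qed

lemma crd_add: "crd (a + b) i = crd a i + crd b i"
  unfolding crd_def using V.representation_add[OF indep] spanning by auto

lemma crd_scale: "crd (sc c a) i = c * crd a i"
  unfolding crd_def using V.representation_scale[OF indep] spanning by auto

lemma crd_zero: "crd 0 i = 0"
  unfolding crd_def by (simp add: V.representation_zero)

lemma crd_sum: "crd (\<Sum>l\<in>I. x l) i = (\<Sum>l\<in>I. crd (x l) i)"
  by (induction I rule: infinite_finite_induct) (auto simp: crd_add crd_zero)

lemma crd_basis: "j < N \<Longrightarrow> crd (bs ! j) i = (if i = j then 1 else 0)"
proof -
  assume j: "j < N"
  have "bs ! j \<in> set bs" using j by simp
  then have r: "V.representation (set bs) (bs ! j) = (\<lambda>v. if v = bs ! j then 1 else 0)"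
    by (rule V.representation_basis[OF indep])
  show ?thesis using j dist by (auto simp: crd_def r nth_eq_iff_index_eq)
qed

lemma crd_lincomb: "crd (\<Sum>l\<in>I. sc (c l) (z l)) i = (\<Sum>l\<in>I. c l * crd (z l) i)"
  by (simp add: crd_sum crd_scale)

lemma lincomb_mult: "(\<Sum>i<N. sc (crd x i) (bs ! i * y)) = x * y"
proof -
  have "x * y = (\<Sum>i<N. sc (crd x i) (bs ! i)) * y" by (simp add: crd_expand)
  also have "\<dots> = (\<Sum>i<N. sc (crd x i) (bs ! i) * y)" by (simp add: sum_distrib_right)
  also have "\<dots> = (\<Sum>i<N. sc (crd x i) (bs ! i * y))" by (simp add: alg(1))
  finally show ?thesis by simp
qed

lemma N_pos: "0 < N"
proof (rule ccontr)
  assume "\<not> 0 < N"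
  then have "bs = []" by simp
  then have "module.span sc (set bs) = {0}" by (simp add: V.span_empty)
  then show False using spanning by (metis UNIV_I singletonD zero_neq_one)
qed

lemma rmod_lincomb:
  assumes "is_rmod sc (n, \<rho>)"
  shows "\<rho> x = (\<Sum>i<N. msc (crd x i) (\<rho> (bs ! i)))"
proof -
  have "\<rho> x = \<rho> (\<Sum>i<N. sc (crd x i) (bs ! i))" by (simp add: crd_expand)
  also have "\<dots> = (\<Sum>i<N. msc (crd x i) (\<rho> (bs ! i)))"
    by (simp add: rmod_sum[OF vs assms] rmodD(5)[OF assms])
  finally show ?thesis .
qed

lemma block_sum:
  assumes j: "j < k" and h: "\<And>t. t < k * N \<Longrightarrow> t div N \<noteq> j \<Longrightarrow> h t = 0"
  shows "(\<Sum>t<k * N. h t) = (\<Sum>i<N. h (j * N + i))"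
proof -
  have sub: "(\<lambda>i. j * N + i) ` {..<N} \<subseteq> {..<k * N}"
  proof
    fix t assume "t \<in> (\<lambda>i. j * N + i) ` {..<N}"
    then obtain i where i: "i < N" "t = j * N + i" by blast
    have "j * N + i < j * N + N" using i by simp
    also have "\<dots> = Suc j * N" by simp
    also have "\<dots> \<le> k * N" using j by (intro mult_le_mono1) simp
    finally show "t \<in> {..<k * N}" using i by simp
  qed
  have "(\<Sum>t<k * N. h t) = (\<Sum>t\<in>(\<lambda>i. j * N + i) ` {..<N}. h t)"
  proof (rule sum.mono_neutral_right[OF _ sub])
    show "\<forall>t\<in>{..<k * N} - (\<lambda>i. j * N + i) ` {..<N}. h t = 0"
    proof
      fix t assume t: "t \<in> {..<k * N} - (\<lambda>i. j * N + i) ` {..<N}"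
      have "t div N \<noteq> j"
      proof
        assume "t div N = j"
        then have "t = j * N + t mod N" by (metis div_mult_mod_eq mult.commute)
        moreover have "t mod N < N" using N_pos by simp
        ultimately show False using t by blast
      qed
      then show "h t = 0" using h t by auto
    qed
  qed simp
  also have "\<dots> = (\<Sum>i<N. h (j * N + i))"
    by (simp add: sum.reindex inj_on_def)
  finally show ?thesis .
qed

lemma div_mod_block: "i < N \<Longrightarrow> (j * N + i) div N = j" "i < N \<Longrightarrow> (j * N + i) mod N = i"
  using N_pos by auto

lemma block_lt: "j < k \<Longrightarrow> i < N \<Longrightarrow> j * N + i < k * N"
proof -
  assume "j < k" "i < N"
  then have "j * N + i < Suc j * N" by simp
  also have "\<dots> \<le> k * N" using \<open>j < k\<close> by (intro mult_le_mono1) simp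
  finally show ?thesis .
qed

definition bv :: "nat \<Rightarrow> nat \<Rightarrow> 'a \<Rightarrow> 'k rvec" where
  "bv k j x = (\<lambda>u. if u < k * N \<and> u div N = j then crd x (u mod N) else 0)"

definition fm :: "nat \<Rightarrow> ('a, 'k) rmod" where
  "fm k = (k * N, \<lambda>a t. if t < k * N then bv k (t div N) (bs ! (t mod N) * a) else (\<lambda>u. 0))"

definition fmr :: "nat \<Rightarrow> 'a \<Rightarrow> 'k mtx" where
  "fmr k = snd (fm k)"

lemma fm_eq: "fm k = (k * N, fmr k)" by (simp add: fm_def fmr_def)

lemma fmr_def': "fmr k a = (\<lambda>t. if t < k * N then bv k (t div N) (bs ! (t mod N) * a) else (\<lambda>u. 0))"
  by (simp add: fmr_def fm_def)

lemma vec_on_bv: "vec_on (k * N) (bv k j x)" unfolding vec_on_def bv_def by auto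

lemma bv_add: "bv k j (x + y) = bv k j x + bv k j y"
  unfolding bv_def by (auto intro!: ext simp: crd_add)

lemma bv_scale: "bv k j (sc c x) = (\<lambda>u. c * bv k j x u)"
  unfolding bv_def by (auto intro!: ext simp: crd_scale)

lemma bv_mult_right:
  assumes j: "j < k"
  shows "vmul (k * N) (bv k j x) (fmr k b) = bv k j (x * b)"
proof (rule ext)
  fix u
  have "vmul (k * N) (bv k j x) (fmr k b) u = (\<Sum>t<k * N. bv k j x t * fmr k b t u)"
    by (simp add: vmul_def)
  also have "\<dots> = (\<Sum>i<N. bv k j x (j * N + i) * fmr k b (j * N + i) u)"
    by (rule block_sum[OF j]) (auto simp: bv_def)
  also have "\<dots> = (\<Sum>i<N. crd x i * bv k j (bs ! i * b) u)"
    by (rule sum.cong) (auto simp: bv_def fmr_def' div_mod_block block_lt[OF j])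
  also have "\<dots> = bv k j (x * b) u"
  proof (cases "u < k * N \<and> u div N = j")
    case True
    have "(\<Sum>i<N. crd x i * bv k j (bs ! i * b) u) = (\<Sum>i<N. crd x i * crd (bs ! i * b) (u mod N))"
      using True by (simp add: bv_def)
    also have "\<dots> = crd (\<Sum>i<N. sc (crd x i) (bs ! i * b)) (u mod N)"
      by (simp add: crd_lincomb)
    also have "\<dots> = crd (x * b) (u mod N)" by (simp add: lincomb_mult)
    finally show ?thesis using True by (simp add: bv_def)
  next
    case False
    then show ?thesis by (auto simp: bv_def)
  qed
  finally show "vmul (k * N) (bv k j x) (fmr k b) u = bv k j (x * b) u" .
qed

lemma bv_basis: "t < k * N \<Longrightarrow> bv k (t div N) (bs ! (t mod N)) = uvec t"
proof (rule ext)
  fix u assume t: "t < k * N"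
  have tm: "t mod N < N" using N_pos by simp
  show "bv k (t div N) (bs ! (t mod N)) u = uvec t u"
  proof (cases "u < k * N \<and> u div N = t div N")
    case True
    then have "u = t \<longleftrightarrow> u mod N = t mod N" by (metis div_mult_mod_eq)
    then show ?thesis using True tm by (auto simp: bv_def uvec_def crd_basis)
  next
    case False
    then show ?thesis using t by (auto simp: bv_def uvec_def)
  qed
qed

lemma mmul_row: "mmul n A B t = vmul n (A t) B"
  unfolding mmul_def vmul_def by simp

lemma fm_rmod: "is_rmod sc (fm k)"
proof -
  have "mat_on (k * N) (k * N) (fmr k a)" for a
    unfolding mat_on_def fmr_def' bv_def by auto
  moreover have "fmr k 1 = idm (k * N)"
  proof (rule ext)
    fix t
    show "fmr k 1 t = idm (k * N) t"
      by (cases "t < k * N") (auto simp: fmr_def' bv_basis uvec_def idm_def intro!: ext)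
  qed
  moreover have "fmr k (a * b) = mmul (k * N) (fmr k a) (fmr k b)" for a b
  proof (rule ext)
    fix t
    show "fmr k (a * b) t = mmul (k * N) (fmr k a) (fmr k b) t"
    proof (cases "t < k * N")
      case True
      have j: "t div N < k" using True by (metis div_less_iff_less_mult N_pos)
      show ?thesis
        using True bv_mult_right[OF j, of "bs ! (t mod N) * a" b]
        by (simp add: mmul_row fmr_def' mult.assoc)
    next
      case False
      then show ?thesis by (simp add: mmul_row fmr_def' vmul_def)
    qed
  qed
  moreover have "fmr k (a + b) = (\<lambda>i j. fmr k a i j + fmr k b i j)" for a b
    by (auto intro!: ext simp: fmr_def' distrib_left bv_add)
  moreover have "fmr k (sc c a) = (\<lambda>i j. c * fmr k a i j)" for c a
    by (auto intro!: ext simp: fmr_def' alg(2)[symmetric] bv_scale)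
  ultimately show ?thesis unfolding is_rmod_def fm_eq by auto
qed

definition gen :: "nat \<Rightarrow> nat \<Rightarrow> 'k rvec" where
  "gen k j = bv k j 1"

definition can :: "nat \<Rightarrow> ('a, 'k) rmod \<Rightarrow> (nat \<Rightarrow> 'k rvec) \<Rightarrow> 'k mtx" where
  "can k X w = (\<lambda>t. if t < k * N then vmul (fst X) (w (t div N)) (snd X (bs ! (t mod N))) else (\<lambda>u. 0))"

lemma bv_can:
  assumes X: "is_rmod sc (n, \<rho>)" and j: "j < k"
  shows "vmul (k * N) (bv k j x) (can k (n, \<rho>) w) = vmul n (w j) (\<rho> x)"
proof (rule ext)
  fix u
  have "vmul (k * N) (bv k j x) (can k (n, \<rho>) w) u = (\<Sum>t<k * N. bv k j x t * can k (n, \<rho>) w t u)"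
    by (simp add: vmul_def)
  also have "\<dots> = (\<Sum>i<N. bv k j x (j * N + i) * can k (n, \<rho>) w (j * N + i) u)"
    by (rule block_sum[OF j]) (auto simp: bv_def)
  also have "\<dots> = (\<Sum>i<N. crd x i * vmul n (w j) (\<rho> (bs ! i)) u)"
    by (rule sum.cong) (auto simp: bv_def can_def div_mod_block block_lt[OF j])
  also have "\<dots> = vmul n (w j) (\<rho> x) u"
    by (simp add: rmod_lincomb[OF X, of x] vmul_sum_right sum_fun_apply vmul_msc_right)
  finally show "vmul (k * N) (bv k j x) (can k (n, \<rho>) w) u = vmul n (w j) (\<rho> x) u" .
qed

lemma can_hom:
  assumes X: "is_rmod sc (n, \<rho>)"
  shows "can k (n, \<rho>) w \<in> hom (fm k) (n, \<rho>)"
  unfolding fm_eq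
proof (rule homI)
  show "mat_on (k * N) n (can k (n, \<rho>) w)"
    unfolding mat_on_def can_def using vec_on_vmul[OF rmodD(1)[OF X]] by (auto simp: vec_on_def)
  fix a
  show "mmul (k * N) (fmr k a) (can k (n, \<rho>) w) = mmul n (can k (n, \<rho>) w) (\<rho> a)"
  proof (rule ext)
    fix t
    show "mmul (k * N) (fmr k a) (can k (n, \<rho>) w) t = mmul n (can k (n, \<rho>) w) (\<rho> a) t"
    proof (cases "t < k * N")
      case True
      have j: "t div N < k" using True by (metis div_less_iff_less_mult N_pos)
      have "mmul (k * N) (fmr k a) (can k (n, \<rho>) w) t
          = vmul n (w (t div N)) (\<rho> (bs ! (t mod N) * a))"
        using True by (simp add: mmul_row fmr_def' bv_can[OF X j])
      also have "\<dots> = vmul n (vmul n (w (t div N)) (\<rho> (bs ! (t mod N)))) (\<rho> a)"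
        by (simp add: rmodD(3)[OF X] vmul_mmul)
      finally show ?thesis using True by (simp add: mmul_row can_def)
    next
      case False
      then show ?thesis by (simp add: mmul_row can_def vmul_def fmr_def')
    qed
  qed
qed

lemma gen_can:
  assumes X: "is_rmod sc (n, \<rho>)" and j: "j < k" and w: "vec_on n (w j)"
  shows "vmul (k * N) (gen k j) (can k (n, \<rho>) w) = w j"
  unfolding gen_def using bv_can[OF X j] rmodD(2)[OF X] vmul_idm[OF w] by simp

lemma hom_from_fm:
  assumes X: "is_rmod sc (n, \<rho>)" and \<phi>: "\<phi> \<in> hom (fm k) (n, \<rho>)"
  shows "\<phi> = can k (n, \<rho>) (\<lambda>j. vmul (k * N) (gen k j) \<phi>)"
proof (rule ext)
  fix t
  have \<phi>': "\<phi> \<in> hom (k * N, fmr k) (n, \<rho>)" using \<phi> by (simp add: fm_eq)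
  show "\<phi> t = can k (n, \<rho>) (\<lambda>j. vmul (k * N) (gen k j) \<phi>) t"
  proof (cases "t < k * N")
    case True
    have j: "t div N < k" using True by (metis div_less_iff_less_mult N_pos)
    have "\<phi> t = vmul (k * N) (uvec t) \<phi>" using True by (simp add: vmul_uvec)
    also have "uvec t = bv k (t div N) (1 * bs ! (t mod N))" using bv_basis[OF True] by simp
    also have "\<dots> = vmul (k * N) (gen k (t div N)) (fmr k (bs ! (t mod N)))"
      by (simp add: gen_def bv_mult_right[OF j])
    also have "vmul (k * N) \<dots> \<phi> = vmul (k * N) (gen k (t div N)) (mmul (k * N) (fmr k (bs ! (t mod N))) \<phi>)"
      by (simp add: vmul_mmul)
    also have "\<dots> = vmul n (vmul (k * N) (gen k (t div N)) \<phi>) (\<rho> (bs ! (t mod N)))"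
      by (simp add: hom_eq[OF \<phi>'] vmul_mmul)
    finally show ?thesis using True by (simp add: can_def)
  next
    case False
    then show ?thesis using hom_mat_on[OF \<phi>'] by (auto simp: can_def mat_on_def intro!: ext)
  qed
qed

lemma fm_proj: "is_proj sc (fm k)"
  unfolding is_proj_def
proof (intro conjI allI impI)
  show "is_rmod sc (fm k)" by (rule fm_rmod)
  fix M Nm g h
  assume MN: "is_rmod sc M" "is_rmod sc Nm" "surj_hom M Nm g" "h \<in> hom (fm k) Nm"
  obtain nM \<rho>M where M: "M = (nM, \<rho>M)" by fastforce
  obtain nN \<rho>N where Nm: "Nm = (nN, \<rho>N)" by fastforce
  have hh: "h \<in> hom (k * N, fmr k) (nN, \<rho>N)" using MN(4) Nm by (simp add: fm_eq)
  have "\<forall>j. \<exists>v. vec_on nM v \<and> vmul nM v g = vmul (k * N) (gen k j) h"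
  proof
    fix j
    have "vec_on nN (vmul (k * N) (gen k j) h)" using vec_on_vmul[OF hom_mat_on[OF hh]] .
    then show "\<exists>v. vec_on nM v \<and> vmul nM v g = vmul (k * N) (gen k j) h"
      using MN(3) M Nm unfolding surj_hom_def by auto
  qed
  then obtain v where v: "\<And>j. vec_on nM (v j)" "\<And>j. vmul nM (v j) g = vmul (k * N) (gen k j) h"
    by metis
  define h' where "h' = can k (nM, \<rho>M) v"
  have h'hom: "h' \<in> hom (fm k) (nM, \<rho>M)" unfolding h'_def using can_hom MN(1) M by simp
  have ghom: "g \<in> hom (nM, \<rho>M) (nN, \<rho>N)" using MN(3) M Nm by (simp add: surj_hom_def)
  have comp: "mmul nM h' g \<in> hom (fm k) (nN, \<rho>N)"
    using hom_comp[OF h'hom[unfolded fm_eq] ghom] by (simp add: fm_eq)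
  have "mmul nM h' g = can k (nN, \<rho>N) (\<lambda>j. vmul (k * N) (gen k j) (mmul nM h' g))"
    using hom_from_fm[OF _ comp] MN(2) Nm by simp
  also have "(\<lambda>j. vmul (k * N) (gen k j) (mmul nM h' g)) = (\<lambda>j. vmul (k * N) (gen k j) h)"
  proof (rule ext)
    fix j
    show "vmul (k * N) (gen k j) (mmul nM h' g) = vmul (k * N) (gen k j) h"
    proof (cases "j < k")
      case True
      have "vmul (k * N) (gen k j) (mmul nM h' g) = vmul nM (vmul (k * N) (gen k j) h') g"
        by (simp add: vmul_mmul)
      also have "vmul (k * N) (gen k j) h' = v j"
        unfolding h'_def by (rule gen_can[OF _ True v(1)]) (use MN(1) M in simp)
      finally show ?thesis using v(2) by simp
    next
      case False
      then have "gen k j = (\<lambda>u. 0)" unfolding gen_def bv_def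
        by (auto intro!: ext) (metis div_less_iff_less_mult N_pos)
      then show ?thesis by simp
    qed
  qed
  also have "can k (nN, \<rho>N) (\<lambda>j. vmul (k * N) (gen k j) h) = h"
    using hom_from_fm[OF _ MN(4)[unfolded Nm]] MN(2) Nm by simp
  finally show "\<exists>h'\<in>hom (fm k) M. mmul (fst M) h' g = h" using h'hom M by auto
qed

lemma fm_surj:
  assumes X: "is_rmod sc (p, \<rho>)"
  shows "surj_hom (fm p) (p, \<rho>) (can p (p, \<rho>) uvec)"
  unfolding surj_hom_def
proof (intro conjI allI impI)
  show "can p (p, \<rho>) uvec \<in> hom (fm p) (p, \<rho>)" by (rule can_hom[OF X])
  fix w :: "'k rvec" assume w: "vec_on (fst (p, \<rho>)) w"
  define v where "v = (\<lambda>t. \<Sum>j<p. w j * gen p j t)"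
  have "vec_on (p * N) v" unfolding v_def vec_on_def gen_def bv_def by auto
  moreover have "vmul (p * N) v (can p (p, \<rho>) uvec) = w"
  proof (rule ext)
    fix u
    have "vmul (p * N) v (can p (p, \<rho>) uvec) u = (\<Sum>j<p. w j * vmul (p * N) (gen p j) (can p (p, \<rho>) uvec) u)"
      unfolding v_def vmul_def by (simp add: sum_distrib_right sum_distrib_left mult.assoc) (rule sum.swap)
    also have "\<dots> = (\<Sum>j<p. w j * uvec j u)"
      by (rule sum.cong) (auto simp: gen_can[OF X] vec_on_uvec)
    also have "\<dots> = w u"
      using w by (cases "u < p") (auto simp: uvec_def vec_on_def if_distrib[of "\<lambda>x. _ * x"] cong: if_cong)
    finally show "vmul (p * N) v (can p (p, \<rho>) uvec) u = w u" .
  qed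
  ultimately show "\<exists>v. vec_on (fst (fm p)) v \<and> vmul (fst (fm p)) v (can p (p, \<rho>) uvec) = w"
    by (auto simp: fm_eq)
qed

end


lemma hom_into_UNIV: "hom_into X Z UNIV = hom X Z"
  by (simp add: hom_into_def)

lemma res_rmod:
  assumes f: "alg_hom sc sc' f" and M: "is_rmod sc' (n, \<sigma>)"
  shows "is_rmod sc (n, \<lambda>a. \<sigma> (f a))"
  using M f unfolding is_rmod_def alg_hom_def by auto

lemma (in fdalg) gen_out: "k \<le> j \<Longrightarrow> gen k j = (\<lambda>u. 0)"
  unfolding gen_def bv_def by (auto intro!: ext) (metis div_less_iff_less_mult N_pos leD)

locale twoalg = A: fdalg sc bs + B: fdalg sc' bs'
  for sc :: "'k::field \<Rightarrow> 'a::ring_1 \<Rightarrow> 'a" and bs and sc' :: "'k \<Rightarrow> 'b::ring_1 \<Rightarrow> 'b" and bs' +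
  fixes f :: "'a \<Rightarrow> 'b"
  assumes fhom: "alg_hom sc sc' f" and fsurj: "surj f"
begin

lemma f1: "f 1 = 1" using fhom by (simp add: alg_hom_def)

definition pi :: "nat \<Rightarrow> 'k mtx" where
  "pi k = A.can k (res f (B.fm k)) (B.gen k)"

definition lift :: "'b \<Rightarrow> 'a" where "lift y = (SOME x. f x = y)"

lemma f_lift: "f (lift y) = y"
  unfolding lift_def by (rule someI_ex) (use fsurj in \<open>metis surjD\<close>)

definition tau :: "nat \<Rightarrow> 'k mtx" where
  "tau k = (\<lambda>t. if t < k * B.N then A.bv k (t div B.N) (lift (bs' ! (t mod B.N))) else (\<lambda>u. 0))"

lemma resfm: "res f (B.fm k) = (k * B.N, \<lambda>a. B.fmr k (f a))"
  by (simp add: B.fm_eq)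

lemma resfm_rmod: "is_rmod sc (k * B.N, \<lambda>a. B.fmr k (f a))"
  using res_rmod[OF fhom, of "k * B.N" "B.fmr k"] B.fm_rmod[of k] by (simp add: B.fm_eq)

lemma pi_hom: "pi k \<in> hom (k * A.N, A.fmr k) (k * B.N, \<lambda>a. B.fmr k (f a))"
  using A.can_hom[OF resfm_rmod, where k=k and w="B.gen k"] by (simp add: pi_def resfm A.fm_eq)

lemma bv_pi: "j < k \<Longrightarrow> vmul (k * A.N) (A.bv k j x) (pi k) = B.bv k j (f x)"
  using A.bv_can[OF resfm_rmod, where j=j and k=k and x=x and w="B.gen k"] B.bv_mult_right[of j k 1 "f x"]
  by (simp add: pi_def resfm B.gen_def)

lemma gen_pi: "vmul (k * A.N) (A.gen k j) (pi k) = B.gen k j"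
proof (cases "j < k")
  case True
  then show ?thesis using bv_pi[OF True, of 1] by (simp add: A.gen_def B.gen_def f1)
next
  case False
  then show ?thesis by (simp add: A.gen_out B.gen_out)
qed

lemma tau_mat: "mat_on (k * B.N) (k * A.N) (tau k)"
  unfolding mat_on_def tau_def A.bv_def by auto

lemma tau_pi: "mmul (k * A.N) (tau k) (pi k) = idm (k * B.N)"
proof (rule ext)
  fix t
  show "mmul (k * A.N) (tau k) (pi k) t = idm (k * B.N) t"
  proof (cases "t < k * B.N")
    case True
    have j: "t div B.N < k" using True by (metis div_less_iff_less_mult B.N_pos)
    have "mmul (k * A.N) (tau k) (pi k) t = B.bv k (t div B.N) (bs' ! (t mod B.N))"
      using True by (simp add: A.mmul_row tau_def bv_pi[OF j] f_lift)
    also have "\<dots> = uvec t" by (rule B.bv_basis[OF True])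
    finally show ?thesis using True by (auto simp: uvec_def idm_def intro!: ext)
  next
    case False
    then show ?thesis by (auto simp: A.mmul_row tau_def vmul_def idm_def intro!: ext)
  qed
qed

lemma factor:
  assumes M: "is_rmod sc' (n, \<sigma>)" and \<phi>: "\<phi> \<in> hom (A.fm k) (n, \<lambda>a. \<sigma> (f a))"
  shows "B.can k (n, \<sigma>) (\<lambda>j. vmul (k * A.N) (A.gen k j) \<phi>) \<in> hom (B.fm k) (n, \<sigma>)"
    and "\<phi> = mmul (k * B.N) (pi k) (B.can k (n, \<sigma>) (\<lambda>j. vmul (k * A.N) (A.gen k j) \<phi>))"
proof -
  let ?w = "\<lambda>j. vmul (k * A.N) (A.gen k j) \<phi>"
  let ?\<psi> = "B.can k (n, \<sigma>) ?w"
  show \<psi>: "?\<psi> \<in> hom (B.fm k) (n, \<sigma>)" by (rule B.can_hom[OF M])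
  have Mr: "is_rmod sc (n, \<lambda>a. \<sigma> (f a))" by (rule res_rmod[OF fhom M])
  have \<psi>r: "?\<psi> \<in> hom (k * B.N, \<lambda>a. B.fmr k (f a)) (n, \<lambda>a. \<sigma> (f a))"
    using hom_res[OF \<psi>[unfolded B.fm_eq]] .
  have comp: "mmul (k * B.N) (pi k) ?\<psi> \<in> hom (A.fm k) (n, \<lambda>a. \<sigma> (f a))"
    using hom_comp[OF pi_hom \<psi>r] by (simp add: A.fm_eq)
  have wv: "vec_on n (?w j)" for j
    using vec_on_vmul[OF hom_mat_on[OF \<phi>[unfolded A.fm_eq]]] .
  have "(\<lambda>j. vmul (k * A.N) (A.gen k j) (mmul (k * B.N) (pi k) ?\<psi>)) = ?w"
  proof (rule ext)
    fix j
    show "vmul (k * A.N) (A.gen k j) (mmul (k * B.N) (pi k) ?\<psi>) = ?w j"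
    proof (cases "j < k")
      case True
      have "vmul (k * A.N) (A.gen k j) (mmul (k * B.N) (pi k) ?\<psi>) = vmul (k * B.N) (B.gen k j) ?\<psi>"
        by (simp add: vmul_mmul[symmetric] gen_pi)
      also have "\<dots> = ?w j" by (rule B.gen_can[OF M True wv])
      finally show ?thesis .
    next
      case False
      then show ?thesis by (simp add: A.gen_out)
    qed
  qed
  then have "mmul (k * B.N) (pi k) ?\<psi> = A.can k (n, \<lambda>a. \<sigma> (f a)) ?w"
    using A.hom_from_fm[OF Mr comp] by simp
  also have "\<dots> = \<phi>" using A.hom_from_fm[OF Mr \<phi>] by simp
  finally show "\<phi> = mmul (k * B.N) (pi k) ?\<psi>" by simp
qed

lemma pi_surj: "surj_hom (A.fm k) (res f (B.fm k)) (pi k)"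
  unfolding surj_hom_def
proof (intro conjI allI impI)
  show "pi k \<in> hom (A.fm k) (res f (B.fm k))" using pi_hom by (simp add: A.fm_eq resfm)
  fix w :: "'k rvec" assume w: "vec_on (fst (res f (B.fm k))) w"
  then have w': "vec_on (k * B.N) w" by (simp add: resfm)
  have "vec_on (k * A.N) (vmul (k * B.N) w (tau k))" by (rule vec_on_vmul[OF tau_mat])
  moreover have "vmul (k * A.N) (vmul (k * B.N) w (tau k)) (pi k) = w"
    by (simp add: vmul_mmul tau_pi vmul_idm[OF w'])
  ultimately show "\<exists>v. vec_on (fst (A.fm k)) v \<and> vmul (fst (A.fm k)) v (pi k) = w"
    by (auto simp: A.fm_eq)
qed

end


context twoalg
begin

lemma lift_proj:
  assumes P': "is_proj sc' (p, \<rho>P)"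
  shows "\<exists>P. is_proj sc P \<and> (\<forall>n \<sigma> U. is_rmod sc' (n, \<sigma>) \<longrightarrow>
            mdim (hom_into P (n, \<lambda>a. \<sigma> (f a)) U) = mdim (hom_into (p, \<rho>P) (n, \<sigma>) U))"
proof -
  have P'r: "is_rmod sc' (p, \<rho>P)" using P' by (simp add: is_proj_def)
  define g' where "g' = B.can p (p, \<rho>P) uvec"
  have g's: "surj_hom (B.fm p) (p, \<rho>P) g'" unfolding g'_def by (rule B.fm_surj[OF P'r])
  have g'h: "g' \<in> hom (p * B.N, B.fmr p) (p, \<rho>P)" using g's by (simp add: surj_hom_def B.fm_eq)
  obtain s where s: "s \<in> hom (p, \<rho>P) (B.fm p)" "mmul (fst (B.fm p)) s g' = idm p"
    using P' B.fm_rmod g's idm_hom[OF P'r] unfolding is_proj_def by blast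
  have sh: "s \<in> hom (p, \<rho>P) (p * B.N, B.fmr p)" using s(1) by (simp add: B.fm_eq)
  have sg: "mmul (p * B.N) s g' = idm p" using s(2) by (simp add: B.fm_eq)
  define \<epsilon> where "\<epsilon> = mmul p g' s"
  have eh: "\<epsilon> \<in> hom (p * B.N, B.fmr p) (p * B.N, B.fmr p)" unfolding \<epsilon>_def by (rule hom_comp[OF g'h sh])
  have em: "mat_on (p * B.N) (p * B.N) \<epsilon>" by (rule hom_mat_on[OF eh])
  have ee: "mmul (p * B.N) \<epsilon> \<epsilon> = \<epsilon>"
  proof -
    have "mmul (p * B.N) \<epsilon> \<epsilon> = mmul p g' (mmul p (mmul (p * B.N) s g') s)"
      by (simp add: \<epsilon>_def mmul_assoc)
    also have "\<dots> = \<epsilon>" using hom_mat_on[OF sh] by (simp add: sg mmul_idm_left \<epsilon>_def)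
    finally show ?thesis .
  qed
  let ?m = "p * A.N" and ?m' = "p * B.N"
  have pih: "pi p \<in> hom (?m, A.fmr p) (?m', \<lambda>a. B.fmr p (f a))" by (rule pi_hom)
  have pim: "mat_on ?m ?m' (pi p)" by (rule hom_mat_on[OF pih])
  have pe: "mmul ?m' (pi p) \<epsilon> \<in> hom (A.fm p) (res f (B.fm p))"
    using hom_comp[OF pih hom_res[OF eh]] by (simp add: A.fm_eq resfm)
  obtain Am where Am: "Am \<in> hom (A.fm p) (A.fm p)" "mmul (fst (A.fm p)) Am (pi p) = mmul ?m' (pi p) \<epsilon>"
    using A.fm_proj[of p] pi_surj[of p] pe resfm_rmod A.fm_rmod unfolding is_proj_def
    by (metis resfm)
  have Amh: "Am \<in> hom (?m, A.fmr p) (?m, A.fmr p)" using Am(1) by (simp add: A.fm_eq)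
  have Amc: "mmul ?m Am (pi p) = mmul ?m' (pi p) \<epsilon>" using Am(2) by (simp add: A.fm_eq)
  obtain q where q: "mmul ?m (peval ?m q Am) (peval ?m q Am) = peval ?m q Am"
      "mmul ?m (peval ?m q Am) (pi p) = mmul ?m' (pi p) \<epsilon>"
    using idem_lift[OF hom_mat_on[OF Amh] em pim ee Amc] by blast
  define E where "E = peval ?m q Am"
  have Fr: "is_rmod sc (?m, A.fmr p)" using A.fm_rmod[of p] by (simp add: A.fm_eq)
  have Eh: "E \<in> hom (?m, A.fmr p) (?m, A.fmr p)" unfolding E_def by (rule peval_hom[OF Fr Amh])
  obtain r B C where BC: "mat_on r ?m B" "mat_on ?m r C" "mmul ?m B C = idm r" "mmul r C B = E"
    using rank_factorization[OF hom_mat_on[OF Eh]] q(1) by (metis E_def)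
  define P where "P = imgmod r B C (?m, A.fmr p)"
  have Pp: "is_proj sc P"
    unfolding P_def by (rule imgmod_proj[OF Fr Eh BC]) (use A.fm_proj[of p] in \<open>simp add: A.fm_eq\<close>)
  have "mdim (hom_into P (n, \<lambda>a. \<sigma> (f a)) U) = mdim (hom_into (p, \<rho>P) (n, \<sigma>) U)"
    if M: "is_rmod sc' (n, \<sigma>)" for n \<sigma> U
  proof -
    have "mdim (hom_into P (n, \<lambda>a. \<sigma> (f a)) U) = mdim (fixset (?m, A.fmr p) (n, \<lambda>a. \<sigma> (f a)) E U)"
      unfolding P_def by (rule imgmod_mdim[OF Fr Eh BC])
    also have "\<dots> = mdim (fixset (?m', B.fmr p) (n, \<sigma>) \<epsilon> U)"
    proof (rule reduce_mdim[symmetric, OF pih tau_mat tau_pi Eh eh])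
      show "mmul ?m E (pi p) = mmul ?m' (pi p) \<epsilon>" using q(2) by (simp add: E_def)
      fix \<phi> assume "\<phi> \<in> hom (?m, A.fmr p) (n, \<lambda>a. \<sigma> (f a))"
      then have \<phi>: "\<phi> \<in> hom (A.fm p) (n, \<lambda>a. \<sigma> (f a))" by (simp add: A.fm_eq)
      show "\<exists>\<phi>'\<in>hom (?m', B.fmr p) (n, \<sigma>). \<phi> = mmul ?m' (pi p) \<phi>'"
        using factor[OF M \<phi>] by (auto simp: B.fm_eq)
    qed
    also have "\<dots> = mdim (hom_into (p, \<rho>P) (n, \<sigma>) U)"
      using split_mdim[OF g'h sh sg, of n \<sigma> U] by (simp add: \<epsilon>_def)
    finally show ?thesis .
  qed
  then show ?thesis using Pp by blast
qed

lemma reduce_proj: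
  assumes R: "is_proj sc (r0, \<rho>R)"
  shows "\<exists>R'. is_proj sc' R' \<and> (\<forall>n \<sigma>. is_rmod sc' (n, \<sigma>) \<longrightarrow>
            mdim (hom (r0, \<rho>R) (n, \<lambda>a. \<sigma> (f a))) = mdim (hom R' (n, \<sigma>)))"
proof -
  have Rr: "is_rmod sc (r0, \<rho>R)" using R by (simp add: is_proj_def)
  let ?m = "r0 * A.N" and ?m' = "r0 * B.N"
  define q where "q = A.can r0 (r0, \<rho>R) uvec"
  have qs: "surj_hom (A.fm r0) (r0, \<rho>R) q" unfolding q_def by (rule A.fm_surj[OF Rr])
  have qh: "q \<in> hom (?m, A.fmr r0) (r0, \<rho>R)" using qs by (simp add: surj_hom_def A.fm_eq)
  obtain t where t: "t \<in> hom (r0, \<rho>R) (A.fm r0)" "mmul (fst (A.fm r0)) t q = idm r0"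
    using R A.fm_rmod qs idm_hom[OF Rr] unfolding is_proj_def by blast
  have th: "t \<in> hom (r0, \<rho>R) (?m, A.fmr r0)" using t(1) by (simp add: A.fm_eq)
  have tq: "mmul ?m t q = idm r0" using t(2) by (simp add: A.fm_eq)
  define E where "E = mmul r0 q t"
  have Eh: "E \<in> hom (?m, A.fmr r0) (?m, A.fmr r0)" unfolding E_def by (rule hom_comp[OF qh th])
  have EE: "mmul ?m E E = E"
  proof -
    have "mmul ?m E E = mmul r0 q (mmul r0 (mmul ?m t q) t)" by (simp add: E_def mmul_assoc)
    also have "\<dots> = E" using hom_mat_on[OF th] by (simp add: tq mmul_idm_left E_def)
    finally show ?thesis .
  qed
  have pih: "pi r0 \<in> hom (?m, A.fmr r0) (?m', \<lambda>a. B.fmr r0 (f a))" by (rule pi_hom)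
  have Bfr: "is_rmod sc' (?m', B.fmr r0)" using B.fm_rmod[of r0] by (simp add: B.fm_eq)
  have Ep: "mmul ?m E (pi r0) \<in> hom (A.fm r0) (?m', \<lambda>a. B.fmr r0 (f a))"
    using hom_comp[OF Eh pih] by (simp add: A.fm_eq)
  define \<epsilon> where "\<epsilon> = B.can r0 (?m', B.fmr r0) (\<lambda>j. vmul ?m (A.gen r0 j) (mmul ?m E (pi r0)))"
  have eh0: "\<epsilon> \<in> hom (B.fm r0) (?m', B.fmr r0)" unfolding \<epsilon>_def by (rule factor(1)[OF Bfr Ep])
  have eh: "\<epsilon> \<in> hom (?m', B.fmr r0) (?m', B.fmr r0)" using eh0 by (simp add: B.fm_eq)
  have comm: "mmul ?m E (pi r0) = mmul ?m' (pi r0) \<epsilon>" unfolding \<epsilon>_def by (rule factor(2)[OF Bfr Ep])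
  have em: "mat_on ?m' ?m' \<epsilon>" by (rule hom_mat_on[OF eh])
  have ee: "mmul ?m' \<epsilon> \<epsilon> = \<epsilon>"
  proof -
    have "mmul ?m' (pi r0) (mmul ?m' \<epsilon> \<epsilon>) = mmul ?m' (mmul ?m' (pi r0) \<epsilon>) \<epsilon>" by (simp add: mmul_assoc)
    also have "\<dots> = mmul ?m E (mmul ?m' (pi r0) \<epsilon>)" by (simp add: comm[symmetric] mmul_assoc)
    also have "\<dots> = mmul ?m (mmul ?m E E) (pi r0)" by (simp add: comm[symmetric] mmul_assoc)
    also have "\<dots> = mmul ?m' (pi r0) \<epsilon>" by (simp add: EE comm)
    finally have "mmul ?m (tau r0) (mmul ?m' (pi r0) (mmul ?m' \<epsilon> \<epsilon>)) = mmul ?m (tau r0) (mmul ?m' (pi r0) \<epsilon>)"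
      by simp
    then show ?thesis
      using em mat_on_mmul[OF em em] by (simp add: mmul_assoc[symmetric] tau_pi mmul_idm_left)
  qed
  obtain r B C where BC: "mat_on r ?m' B" "mat_on ?m' r C" "mmul ?m' B C = idm r" "mmul r C B = \<epsilon>"
    using rank_factorization[OF em ee] by blast
  define R' where "R' = imgmod r B C (?m', B.fmr r0)"
  have Rp: "is_proj sc' R'"
    unfolding R'_def by (rule imgmod_proj[OF Bfr eh BC]) (use B.fm_proj[of r0] in \<open>simp add: B.fm_eq\<close>)
  have "mdim (hom (r0, \<rho>R) (n, \<lambda>a. \<sigma> (f a))) = mdim (hom R' (n, \<sigma>))"
    if M: "is_rmod sc' (n, \<sigma>)" for n \<sigma>
  proof -
    have "mdim (hom (r0, \<rho>R) (n, \<lambda>a. \<sigma> (f a))) = mdim (hom_into (r0, \<rho>R) (n, \<lambda>a. \<sigma> (f a)) UNIV)"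
      by (simp add: hom_into_UNIV)
    also have "\<dots> = mdim (fixset (?m, A.fmr r0) (n, \<lambda>a. \<sigma> (f a)) E UNIV)"
      using split_mdim[OF qh th tq, of n "\<lambda>a. \<sigma> (f a)" UNIV] by (simp add: E_def)
    also have "\<dots> = mdim (fixset (?m', B.fmr r0) (n, \<sigma>) \<epsilon> UNIV)"
    proof (rule reduce_mdim[symmetric, OF pih tau_mat tau_pi Eh eh comm])
      fix \<phi> assume "\<phi> \<in> hom (?m, A.fmr r0) (n, \<lambda>a. \<sigma> (f a))"
      then have \<phi>: "\<phi> \<in> hom (A.fm r0) (n, \<lambda>a. \<sigma> (f a))" by (simp add: A.fm_eq)
      show "\<exists>\<phi>'\<in>hom (?m', B.fmr r0) (n, \<sigma>). \<phi> = mmul ?m' (pi r0) \<phi>'"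
        using factor[OF M \<phi>] by (auto simp: B.fm_eq)
    qed
    also have "\<dots> = mdim (hom_into R' (n, \<sigma>) UNIV)"
      unfolding R'_def by (rule imgmod_mdim[symmetric, OF Bfr eh BC])
    finally show ?thesis by (simp add: hom_into_UNIV)
  qed
  then show ?thesis using Rp by blast
qed

end


lemma fd_basis:
  assumes "fd_algebra (sc :: 'k::field \<Rightarrow> 'a::ring_1 \<Rightarrow> 'a)"
  shows "\<exists>bs. fdalg sc bs"
proof -
  have vs: "vector_space sc" and alg: "\<forall>c x y. sc c (x * y) = sc c x * y \<and> sc c (x * y) = x * sc c y"
    and fin: "\<exists>B. finite B \<and> module.span sc B = UNIV"
    using assms unfolding fd_algebra_def by blast+
  interpret V: vector_space sc by (rule vs)
  obtain B where B: "finite B" "V.span B = UNIV" using fin by blast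
  obtain B' where B': "B' \<subseteq> UNIV" "V.independent B'" "UNIV \<subseteq> V.span B'" "card B' = V.dim (UNIV :: 'a set)"
    by (rule V.basis_exists)
  have "finite B'" using V.independent_span_bound[OF B(1) B'(2)] B(2) by auto
  then obtain bs where bs: "set bs = B'" "distinct bs" using finite_distinct_list by blast
  have a1: "\<And>c x y. sc c (x * y) = sc c x * y" and a2: "\<And>c x y. sc c (x * y) = x * sc c y"
    using alg by blast+
  have "fdalg sc bs"
    by (rule fdalg.intro[OF vs bs(2) _ _ a1 a2]) (use bs B' in auto)
  then show ?thesis by blast
qed

lemma submod_res: "surj f \<Longrightarrow> submod (n, \<lambda>a. \<sigma> (f a)) U = submod (n, \<sigma>) U"
  unfolding submod_def by (auto, metis surjD)

lemma iso_res: "surj f \<Longrightarrow> iso_mod (res f M) (res f N) = iso_mod M N"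
  unfolding iso_mod_def res_def by (cases M, cases N) (simp add: hom_res_eq)

theorem proposition3p8:
  fixes sc :: "'k::alg_closed_field \<Rightarrow> 'a::ring_1 \<Rightarrow> 'a"
    and sc' :: "'k \<Rightarrow> 'b::ring_1 \<Rightarrow> 'b"
    and f :: "'a \<Rightarrow> 'b"
  assumes "fd_algebra sc" and "fd_algebra sc'"
    and "alg_hom sc sc' f" and "surj f"
    and "\<exists>d' \<theta>'. is_K0proj sc' \<theta>' \<and> infinite (stable_classes sc' \<theta>' d')"
  shows "\<exists>d \<theta>. is_K0proj sc \<theta> \<and> infinite (stable_classes sc \<theta> d)"
proof -
  obtain bs where bs: "fdalg sc bs" using fd_basis[OF assms(1)] by blast
  obtain bs' where bs': "fdalg sc' bs'" using fd_basis[OF assms(2)] by blast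
  interpret T: twoalg sc bs sc' bs' f
    using bs bs' assms(3,4) by (simp add: twoalg_def twoalg_axioms_def)
  obtain d' \<theta>' where th': "is_K0proj sc' \<theta>'" "infinite (stable_classes sc' \<theta>' d')" using assms(5) by blast
  obtain p \<rho>P q \<rho>Q where thp: "\<theta>' = ((p, \<rho>P), (q, \<rho>Q))" by (metis prod.exhaust)
  have Pp: "is_proj sc' (p, \<rho>P)" and Qp: "is_proj sc' (q, \<rho>Q)" using th'(1) thp by (auto simp: is_K0proj_def)
  obtain P where P: "is_proj sc P" "\<And>n \<sigma> U. is_rmod sc' (n, \<sigma>) \<Longrightarrow>
            mdim (hom_into P (n, \<lambda>a. \<sigma> (f a)) U) = mdim (hom_into (p, \<rho>P) (n, \<sigma>) U)"
    using T.lift_proj[OF Pp] by blast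
  obtain Q where Q: "is_proj sc Q" "\<And>n \<sigma> U. is_rmod sc' (n, \<sigma>) \<Longrightarrow>
            mdim (hom_into Q (n, \<lambda>a. \<sigma> (f a)) U) = mdim (hom_into (q, \<rho>Q) (n, \<sigma>) U)"
    using T.lift_proj[OF Qp] by blast
  define \<theta> where "\<theta> = (P, Q)"
  have K0: "is_K0proj sc \<theta>" using P(1) Q(1) by (simp add: \<theta>_def is_K0proj_def)
  define red where "red R = (SOME R'. is_proj sc' R' \<and> (\<forall>n \<sigma>. is_rmod sc' (n, \<sigma>) \<longrightarrow>
            mdim (hom R (n, \<lambda>a. \<sigma> (f a))) = mdim (hom R' (n, \<sigma>))))" for R
  have red: "is_proj sc' (red R) \<and> (\<forall>n \<sigma>. is_rmod sc' (n, \<sigma>) \<longrightarrow>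
            mdim (hom R (n, \<lambda>a. \<sigma> (f a))) = mdim (hom (red R) (n, \<sigma>)))" if "is_proj sc R" for R
  proof -
    obtain r0 \<rho>R where R: "R = (r0, \<rho>R)" by fastforce
    show ?thesis unfolding red_def
      by (rule someI_ex) (use T.reduce_proj[of r0 \<rho>R] that R in auto)
  qed
  define d where "d R = (if is_proj sc R then d' (red R) else 0)" for R
  let ?S' = "{M. theta_stable sc' \<theta>' M \<and> dimvec sc' M = d'}"
  let ?S = "{M. theta_stable sc \<theta> M \<and> dimvec sc M = d}"
  have resS: "res f M \<in> ?S" if M: "M \<in> ?S'" for M
  proof -
    obtain n \<sigma> where nM: "M = (n, \<sigma>)" by fastforce
    have st: "theta_stable sc' \<theta>' (n, \<sigma>)" and dv: "dimvec sc' (n, \<sigma>) = d'" using M nM by auto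
    have Mr: "is_rmod sc' (n, \<sigma>)" using st by (simp add: theta_stable_def)
    have pr: "pairing \<theta> (n, \<lambda>a. \<sigma> (f a)) = pairing \<theta>' (n, \<sigma>)"
      using P(2)[OF Mr, of UNIV] Q(2)[OF Mr, of UNIV] by (simp add: pairing_def \<theta>_def thp hom_into_UNIV)
    have prs: "pairing_sub \<theta> (n, \<lambda>a. \<sigma> (f a)) U = pairing_sub \<theta>' (n, \<sigma>) U" for U
      using P(2)[OF Mr, of U] Q(2)[OF Mr, of U] by (simp add: pairing_sub_def \<theta>_def thp)
    have "\<forall>U. submod (n, \<lambda>a. \<sigma> (f a)) U \<longrightarrow> U \<noteq> {\<lambda>i. 0} \<longrightarrow> U \<noteq> {v. vec_on n v}
        \<longrightarrow> pairing_sub \<theta> (n, \<lambda>a. \<sigma> (f a)) U < 0"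
      using st unfolding theta_stable_def by (simp add: submod_res[OF assms(4)] prs)
    then have "theta_stable sc \<theta> (n, \<lambda>a. \<sigma> (f a))"
      using st res_rmod[OF assms(3) Mr] pr
      unfolding theta_stable_def by simp
    moreover have "dimvec sc (n, \<lambda>a. \<sigma> (f a)) = d"
    proof (rule ext)
      fix R show "dimvec sc (n, \<lambda>a. \<sigma> (f a)) R = d R"
      proof (cases "is_proj sc R")
        case True
        then have "mdim (hom R (n, \<lambda>a. \<sigma> (f a))) = mdim (hom (red R) (n, \<sigma>))" "is_proj sc' (red R)"
          using red Mr by auto
        moreover have "dimvec sc' (n, \<sigma>) (red R) = d' (red R)" using dv by simp
        ultimately show ?thesis using True by (simp add: dimvec_def d_def)
      next
        case False
        then show ?thesis by (simp add: dimvec_def d_def)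
      qed
    qed
    ultimately show ?thesis using nM by simp
  qed
  let ?cls = "\<lambda>M. {N. is_rmod sc N \<and> iso_mod M N}"
  let ?cls' = "\<lambda>M. {N. is_rmod sc' N \<and> iso_mod M N}"
  let ?G = "\<lambda>K. {N'. is_rmod sc' N' \<and> res f N' \<in> K}"
  have sub: "?cls' ` ?S' \<subseteq> ?G ` (?cls ` ?S)"
  proof
    fix K assume "K \<in> ?cls' ` ?S'"
    then obtain M where M: "M \<in> ?S'" "K = ?cls' M" by blast
    have "?cls' M = ?G (?cls (res f M))"
    proof (intro set_eqI iffI)
      fix N' assume "N' \<in> ?cls' M"
      then have "is_rmod sc' N'" "iso_mod M N'" by auto
      moreover have "is_rmod sc (res f N')"
        using res_rmod[OF assms(3), of "fst N'" "snd N'"] \<open>is_rmod sc' N'\<close> by (simp add: res_def)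
      moreover have "iso_mod (res f M) (res f N') = iso_mod M N'" by (rule iso_res[OF assms(4)])
      ultimately show "N' \<in> ?G (?cls (res f M))" by blast
    next
      fix N' assume N': "N' \<in> ?G (?cls (res f M))"
      have "iso_mod (res f M) (res f N') = iso_mod M N'" by (rule iso_res[OF assms(4)])
      then show "N' \<in> ?cls' M" using N' by blast
    qed
    then show "K \<in> ?G ` (?cls ` ?S)" using M resS[OF M(1)] by blast
  qed
  have e1: "stable_classes sc' \<theta>' d' = ?cls' ` ?S'" by (simp add: stable_classes_def)
  have e2: "stable_classes sc \<theta> d = ?cls ` ?S" by (simp add: stable_classes_def)
  have "infinite (stable_classes sc \<theta> d)"
  proof
    assume "finite (stable_classes sc \<theta> d)"
    then have "finite (?G ` (?cls ` ?S))" unfolding e2 by (rule finite_imageI)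
    then have "finite (?cls' ` ?S')" by (rule finite_subset[OF sub])
    then show False using th'(2) unfolding e1 by blast
  qed
  then show ?thesis using K0 by blast
qed


end
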